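(* Let $r \ge 2$ be an integer, $\varepsilon \in (0,1)$, and let $\gamma, \eta > 0$ satisfy \[ \frac{(1+\eta)(1-\varepsilon)}{(1-r\gamma)^2} \le 1 - \frac{\varepsilon}{2} \qquad\text{and}\qquad (1+\gamma r)^{r-1} \le 1 + \frac{\varepsilon}{4}. \] Then for all choices of $\Pi = \Pi_n \in \mathcal{P}_{n,r}(\gamma)$, of an edge $e = e_n \in \Pi^c$, and of $m = m(n)$ with $n \le m \le (1-\varepsilon)m_r$, \[ \frac{m \cdot |\mathcal{G}_m(\Pi,e) \cap \mathcal{F}_{n,m}(K_{r+1})|}{\binom{e(\Pi)}{m-1}} \to \infty \quad \text{as } n \to \infty. \]
   Context: All graphs have vertex set $[n]$. $\mathcal{P}_{n,r}(\gamma)$ is the set of partitions $\{V_1,\dots,V_r\}$ of $[n]$ into $r$ parts with $(\frac1r-\gamma)n\le|V_i|\le(\frac1r+\gamma)n$ for all $i$. A partition $\Pi$ is identified with the complete $r$-partite graph with parts $V_1,\dots,V_r$; $e(\Pi)$ is its number of edges, and $\Pi^c$ is its complement (the union of the complete graphs on $V_1,\dots,V_r$). $\mathcal{G}_{m-1}(\Pi)$ is the set of subgraphs of $\Pi$ on $[n]$ with exactly $m-1$ edges, and for $e \in \Pi^c$, $\mathcal{G}_m(\Pi,e) = \{G + e : G \in \mathcal{G}_{m-1}(\Pi)\}$. $\mathcal{F}_{n,m}(K_{r+1})$ is the family of $K_{r+1}$-free graphs on $[n]$ with $m$ edges. $m_r = \theta_r n^{2-\frac{2}{r+2}}(\log n)^{1/(\binom{r+1}{2}-1)}$,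 $\theta_r = \frac{r-1}{2r}\left[ r\left(\frac{2r+2}{r+2}\right)^{\frac{1}{r-1}}\right]^{\frac{2}{r+2}}$, $\log$ natural. *)

theory Defs
  imports Complex_Main
begin

text \<open>Graphs on the vertex set [n] = {1..n} are represented by their edge sets;
an edge is a 2-element set of vertices.\<close>

definition all_edges :: "nat \<Rightarrow> nat set set" where
  "all_edges n = {{u, v} | u v. u \<in> {1..n} \<and> v \<in> {1..n} \<and> u \<noteq> v}"

definition in_Pnr :: "nat \<Rightarrow> nat \<Rightarrow> real \<Rightarrow> (nat \<Rightarrow> nat set) \<Rightarrow> bool" where
  "in_Pnr n r \<gamma> V \<longleftrightarrow>
     (\<Union>i<r. V i) = {1..n} \<and>
     (\<forall>i<r. \<forall>j<r. i \<noteq> j \<longrightarrow> V i \<inter> V j = {}) \<and>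
     (\<forall>i<r. (1 / real r - \<gamma>) * real n \<le> real (card (V i)) \<and>
             real (card (V i)) \<le> (1 / real r + \<gamma>) * real n)"

definition partite_graph :: "nat \<Rightarrow> nat \<Rightarrow> (nat \<Rightarrow> nat set) \<Rightarrow> nat set set" where
  "partite_graph n r V = {{u, v} | u v. u \<in> {1..n} \<and> v \<in> {1..n} \<and>
      (\<exists>i<r. \<exists>j<r. i \<noteq> j \<and> u \<in> V i \<and> v \<in> V j)}"

definition partite_compl :: "nat \<Rightarrow> nat \<Rightarrow> (nat \<Rightarrow> nat set) \<Rightarrow> nat set set" where
  "partite_compl n r V = {{u, v} | u v. u \<in> {1..n} \<and> v \<in> {1..n} \<and> u \<noteq> v \<and>
      (\<exists>i<r. u \<in> V i \<and> v \<in> V i)}"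

definition G_sub :: "nat \<Rightarrow> nat \<Rightarrow> (nat \<Rightarrow> nat set) \<Rightarrow> nat \<Rightarrow> nat set set set" where
  "G_sub n r V k = {G. G \<subseteq> partite_graph n r V \<and> card G = k}"

definition G_plus :: "nat \<Rightarrow> nat \<Rightarrow> (nat \<Rightarrow> nat set) \<Rightarrow> nat \<Rightarrow> nat set \<Rightarrow> nat set set set" where
  "G_plus n r V m e = (\<lambda>G. insert e G) ` G_sub n r V (m - 1)"

definition has_clique :: "nat \<Rightarrow> nat \<Rightarrow> nat set set \<Rightarrow> bool" where
  "has_clique n s H \<longleftrightarrow> (\<exists>S. S \<subseteq> {1..n} \<and> card S = s \<and>
       (\<forall>u\<in>S. \<forall>v\<in>S. u \<noteq> v \<longrightarrow> {u, v} \<in> H))"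

definition F_free :: "nat \<Rightarrow> nat \<Rightarrow> nat \<Rightarrow> nat set set set" where
  "F_free n m r = {H. H \<subseteq> all_edges n \<and> card H = m \<and> \<not> has_clique n (r + 1) H}"

definition theta :: "nat \<Rightarrow> real" where
  "theta r = (real r - 1) / (2 * real r) *
     (real r * ((2 * real r + 2) / (real r + 2)) powr (1 / (real r - 1))) powr (2 / (real r + 2))"

definition m_r :: "nat \<Rightarrow> nat \<Rightarrow> real" where
  "m_r r n = theta r * real n powr (2 - 2 / (real r + 2)) *
     ln (real n) powr (1 / (real ((r + 1) choose 2) - 1))"

end

theory Submission
  imports Defs "HOL-Library.FuncSet" "HOL-Real_Asymp.Real_Asymp"
begin


definition Pr :: "real \<Rightarrow> 'a set \<Rightarrow> ('a set \<Rightarrow> bool) \<Rightarrow> real" where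
  "Pr p E A = (\<Sum>S | S \<subseteq> E \<and> A S. p ^ card S * (1 - p) ^ (card E - card S))"

definition down :: "('a set \<Rightarrow> bool) \<Rightarrow> bool" where
  "down A \<longleftrightarrow> (\<forall>S T. A S \<longrightarrow> T \<subseteq> S \<longrightarrow> A T)"

lemma Pr_empty: "Pr p {} A = (if A {} then 1 else 0)"
  unfolding Pr_def by (cases "A {}") (auto simp: Collect_conv_if)

lemma Pr_insert:
  assumes "finite E" "x \<notin> E"
  shows "Pr p (insert x E) A = (1 - p) * Pr p E A + p * Pr p E (\<lambda>S. A (insert x S))"
proof -
  have split: "{S. S \<subseteq> insert x E \<and> A S} = {S. S \<subseteq> E \<and> A S} \<union> insert x ` {S. S \<subseteq> E \<and> A (insert x S)}"
  proof (rule set_eqI, rule iffI)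
    fix S assume "S \<in> {S. S \<subseteq> insert x E \<and> A S}"
    then have S: "S \<subseteq> insert x E" "A S" by auto
    show "S \<in> {S. S \<subseteq> E \<and> A S} \<union> insert x ` {S. S \<subseteq> E \<and> A (insert x S)}"
    proof (cases "x \<in> S")
      case True
      then have "S = insert x (S - {x})" by auto
      moreover have "S - {x} \<subseteq> E" using S by auto
      ultimately show ?thesis using S by (metis (mono_tags, lifting) UnI2 image_eqI mem_Collect_eq)
    next
      case False then show ?thesis using S by auto
    qed
  qed auto
  have fin: "finite {S. S \<subseteq> E \<and> A S}" "finite {S. S \<subseteq> E \<and> A (insert x S)}"
    using assms by (auto intro: finite_subset[of _ "Pow E"])
  have disj: "{S. S \<subseteq> E \<and> A S} \<inter> insert x ` {S. S \<subseteq> E \<and> A (insert x S)} = {}"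
    using assms by auto
  have inj: "inj_on (insert x) {S. S \<subseteq> E \<and> A (insert x S)}"
    using assms unfolding inj_on_def by (metis insert_ident mem_Collect_eq subsetD)
  have cE: "card (insert x E) = Suc (card E)" using assms by simp
  have s1: "(\<Sum>S | S \<subseteq> E \<and> A S. p ^ card S * (1 - p) ^ (card (insert x E) - card S))
      = (1 - p) * Pr p E A"
    unfolding Pr_def sum_distrib_left
  proof (rule sum.cong)
    fix S assume "S \<in> {S. S \<subseteq> E \<and> A S}"
    then have "card S \<le> card E" using assms by (auto intro: card_mono)
    then have "card (insert x E) - card S = Suc (card E - card S)" using cE by simp
    then show "p ^ card S * (1 - p) ^ (card (insert x E) - card S) = (1 - p) * (p ^ card S * (1 - p) ^ (card E - card S))"
      by simp
  qed simp
  have s2: "(\<Sum>S \<in> insert x ` {S. S \<subseteq> E \<and> A (insert x S)}. p ^ card S * (1 - p) ^ (card (insert x E) - card S))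
      = p * Pr p E (\<lambda>S. A (insert x S))"
    unfolding Pr_def sum_distrib_left sum.reindex[OF inj] o_def
  proof (rule sum.cong)
    fix S assume "S \<in> {S. S \<subseteq> E \<and> A (insert x S)}"
    then have S: "S \<subseteq> E" by auto
    then have "x \<notin> S" "finite S" using assms by (auto intro: finite_subset)
    then have "card (insert x S) = Suc (card S)" by simp
    then show "p ^ card (insert x S) * (1 - p) ^ (card (insert x E) - card (insert x S)) = p * (p ^ card S * (1 - p) ^ (card E - card S))"
      using cE by simp
  qed simp
  show ?thesis
    unfolding Pr_def[of p "insert x E"] split sum.union_disjoint[OF fin(1) finite_imageI[OF fin(2)] disj]
    using s1 s2 by simp
qed

lemma Pr_nonneg: "0 \<le> p \<Longrightarrow> p \<le> 1 \<Longrightarrow> 0 \<le> Pr p E A"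
  unfolding Pr_def by (intro sum_nonneg) auto

lemma Pr_mono:
  assumes "0 \<le> p" "p \<le> 1" "finite E" "\<And>S. A S \<Longrightarrow> B S"
  shows "Pr p E A \<le> Pr p E B"
  unfolding Pr_def using assms by (intro sum_mono2) (auto intro: finite_subset[of _ "Pow E"])

lemma Pr_True: "finite E \<Longrightarrow> Pr p E (\<lambda>_. True) = 1"
proof (induction E rule: finite_induct)
  case empty then show ?case by (simp add: Pr_empty)
next
  case (insert x F) then show ?case by (simp add: Pr_insert algebra_simps)
qed

lemma Pr_sup: "finite E \<Longrightarrow> B \<subseteq> E \<Longrightarrow> Pr p E (\<lambda>S. B \<subseteq> S) = p ^ card B"
proof (induction E arbitrary: B rule: finite_induct)
  case empty then show ?case by (simp add: Pr_empty)
next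
  case (insert x F)
  show ?case
  proof (cases "x \<in> B")
    case True
    then have B: "B - {x} \<subseteq> F" using insert by auto
    have f: "finite B" using insert finite_subset by blast
    have e1: "(\<lambda>S. B \<subseteq> insert x S) = (\<lambda>S. B - {x} \<subseteq> S)" by auto
    have e2: "Pr p F (\<lambda>S. B \<subseteq> S) = 0"
    proof -
      have h: "{S. S \<subseteq> F \<and> B \<subseteq> S} = {}" using True insert by auto
      show ?thesis unfolding Pr_def h by simp
    qed
    have "card B = Suc (card (B - {x}))" using True f by (metis card_Suc_Diff1)
    then show ?thesis
      using insert.IH[OF B] insert.hyps by (simp add: Pr_insert e1 e2)
  next
    case False
    then have B: "B \<subseteq> F" using insert by auto
    have e1: "(\<lambda>S. B \<subseteq> insert x S) = (\<lambda>S. B \<subseteq> S)" using False by auto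
    show ?thesis using insert.IH[OF B] insert.hyps by (simp add: Pr_insert e1 algebra_simps)
  qed
qed

lemma Pr_not:
  assumes "finite E"
  shows "Pr p E (\<lambda>S. \<not> A S) = 1 - Pr p E A"
proof -
  have f: "finite {S. S \<subseteq> E}" using assms by simp
  have h: "{S. S \<subseteq> E \<and> \<not> A S} = {S. S \<subseteq> E} - {S. S \<subseteq> E \<and> A S}" by auto
  have "Pr p E (\<lambda>S. \<not> A S) = (\<Sum>S\<in>{S. S \<subseteq> E}. p ^ card S * (1 - p) ^ (card E - card S))
     - (\<Sum>S\<in>{S. S \<subseteq> E \<and> A S}. p ^ card S * (1 - p) ^ (card E - card S))"
    unfolding Pr_def h by (rule sum_diff) (auto simp: f)
  also have "\<dots> = Pr p E (\<lambda>_. True) - Pr p E A" unfolding Pr_def by simp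
  finally have "Pr p E (\<lambda>S. \<not> A S) = Pr p E (\<lambda>_. True) - Pr p E A" .
  then show ?thesis using Pr_True[OF assms] by simp
qed

lemma harris:
  assumes "finite E" "0 \<le> p" "p \<le> 1" "down A" "down B"
  shows "Pr p E A * Pr p E B \<le> Pr p E (\<lambda>S. A S \<and> B S)"
  using assms(1,4,5)
proof (induction E arbitrary: A B rule: finite_induct)
  case empty then show ?case by (simp add: Pr_empty)
next
  case (insert x F)
  let ?A1 = "\<lambda>S. A (insert x S)" and ?B1 = "\<lambda>S. B (insert x S)"
  have d1: "down ?A1" "down ?B1" using insert.prems unfolding down_def
    by (meson insert_mono)+
  have i0: "Pr p F A * Pr p F B \<le> Pr p F (\<lambda>S. A S \<and> B S)" using insert.IH insert.prems by blast
  have i1: "Pr p F ?A1 * Pr p F ?B1 \<le> Pr p F (\<lambda>S. ?A1 S \<and> ?B1 S)" using insert.IH d1 by blast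
  have m1: "Pr p F ?A1 \<le> Pr p F A" using insert.prems insert.hyps assms
    by (intro Pr_mono) (auto simp: down_def)
  have m2: "Pr p F ?B1 \<le> Pr p F B" using insert.prems insert.hyps assms
    by (intro Pr_mono) (auto simp: down_def)
  define a0 where "a0 = Pr p F A"
  define a1 where "a1 = Pr p F ?A1"
  define b0 where "b0 = Pr p F B"
  define b1 where "b1 = Pr p F ?B1"
  have nn: "0 \<le> a1" "0 \<le> b1" unfolding a1_def b1_def using Pr_nonneg assms by blast+
  have "((1 - p) * a0 + p * a1) * ((1 - p) * b0 + p * b1) \<le> (1 - p) * (a0 * b0) + p * (a1 * b1)"
  proof -
    have "0 \<le> p * (1 - p) * ((a0 - a1) * (b0 - b1))"
      using m1 m2 assms unfolding a0_def a1_def b0_def b1_def by (intro mult_nonneg_nonneg) auto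
    then show ?thesis by (simp add: algebra_simps)
  qed
  also have "\<dots> \<le> (1 - p) * Pr p F (\<lambda>S. A S \<and> B S) + p * Pr p F (\<lambda>S. ?A1 S \<and> ?B1 S)"
    using i0 i1 assms unfolding a0_def a1_def b0_def b1_def
    by (intro add_mono mult_left_mono) auto
  finally show ?case using insert.hyps
    by (simp add: Pr_insert a0_def a1_def b0_def b1_def)
qed

lemma harris_prod:
  assumes "finite E" "0 \<le> p" "p \<le> 1" "finite I" "\<And>i. i \<in> I \<Longrightarrow> down (A i)"
  shows "(\<Prod>i\<in>I. Pr p E (A i)) \<le> Pr p E (\<lambda>S. \<forall>i\<in>I. A i S)"
  using assms(4,5)
proof (induction I rule: finite_induct)
  case empty then show ?case using Pr_True[OF assms(1)] by simp
next
  case (insert j I)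
  have d: "down (\<lambda>S. \<forall>i\<in>I. A i S)" using insert.prems unfolding down_def by blast
  have "(\<Prod>i\<in>insert j I. Pr p E (A i)) = Pr p E (A j) * (\<Prod>i\<in>I. Pr p E (A i))"
    using insert.hyps by simp
  also have "\<dots> \<le> Pr p E (A j) * Pr p E (\<lambda>S. \<forall>i\<in>I. A i S)"
    using insert Pr_nonneg assms by (intro mult_left_mono) auto
  also have "\<dots> \<le> Pr p E (\<lambda>S. A j S \<and> (\<forall>i\<in>I. A i S))"
    using harris[OF assms(1-3)] insert.prems d by blast
  finally show ?case by simp
qed


definition cnt :: "'a set \<Rightarrow> ('a set \<Rightarrow> bool) \<Rightarrow> nat \<Rightarrow> nat" where
  "cnt E A k = card {S. S \<subseteq> E \<and> card S = k \<and> A S}"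

lemma cnt_le: "finite E \<Longrightarrow> cnt E A k \<le> card E choose k"
proof -
  assume f: "finite E"
  have fin: "finite {S. S \<subseteq> E \<and> card S = k}"
    by (rule finite_subset[of _ "Pow E"]) (use f in auto)
  have "card {S. S \<subseteq> E \<and> card S = k \<and> A S} \<le> card {S. S \<subseteq> E \<and> card S = k}"
    by (rule card_mono[OF fin]) auto
  then show ?thesis unfolding cnt_def using n_subsets[OF f, of k] by simp
qed

lemma cnt_double:
  assumes "finite E" "down A"
  shows "cnt E A (Suc k) * Suc k \<le> cnt E A k * (card E - k)"
proof -
  let ?SS = "{S. S \<subseteq> E \<and> card S = Suc k \<and> A S}"
  let ?TT = "{T. T \<subseteq> E \<and> card T = k \<and> A T}"
  define D where "D = (SIGMA S:?SS. {T. T \<subseteq> S \<and> card T = k})"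
  have finSS: "finite ?SS" "finite ?TT" using assms(1) by (auto intro: finite_subset[of _ "Pow E"])
  have fT: "\<forall>S\<in>?SS. finite {T. T \<subseteq> S \<and> card T = k}"
  proof
    fix S assume "S \<in> ?SS"
    then have "finite (Pow S)" using assms(1) finite_subset by auto
    then show "finite {T. T \<subseteq> S \<and> card T = k}" by (rule finite_subset[rotated]) auto
  qed
  have "card D = (\<Sum>S\<in>?SS. card {T. T \<subseteq> S \<and> card T = k})"
    unfolding D_def by (rule card_SigmaI) (use finSS fT in auto)
  also have "\<dots> = (\<Sum>S\<in>?SS. Suc k)"
  proof (rule sum.cong)
    fix S assume "S \<in> ?SS"
    then have "finite S" "card S = Suc k" using assms(1) finite_subset by auto
    then show "card {T. T \<subseteq> S \<and> card T = k} = Suc k" using n_subsets[of S k] by simp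
  qed simp
  finally have cD: "card D = cnt E A (Suc k) * Suc k" unfolding cnt_def by simp
  have sub: "D \<subseteq> (\<lambda>(T, y). (insert y T, T)) ` (SIGMA T:?TT. E - T)"
  proof
    fix z assume "z \<in> D"
    then obtain S T where z: "z = (S, T)" "S \<subseteq> E" "card S = Suc k" "A S" "T \<subseteq> S" "card T = k"
      unfolding D_def by auto
    have fS: "finite S" using z assms(1) finite_subset by auto
    have fT: "finite T" using z fS finite_subset by blast
    have "card (S - T) = 1" using z fT by (simp add: card_Diff_subset)
    then obtain y where y: "S - T = {y}" by (meson card_1_singletonE)
    have "S = insert y T" using y z by auto
    moreover have "T \<in> ?TT" using z assms(2) unfolding down_def by auto
    moreover have "y \<in> E - T" using y z by auto
    ultimately show "z \<in> (\<lambda>(T, y). (insert y T, T)) ` (SIGMA T:?TT. E - T)"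
      using z by (auto intro!: image_eqI[where x="(T, y)"])
  qed
  have finSig: "finite (SIGMA T:?TT. E - T)"
    by (rule finite_SigmaI[OF finSS(2)]) (use assms(1) in blast)
  have "card D \<le> card ((\<lambda>(T, y). (insert y T, T)) ` (SIGMA T:?TT. E - T))"
    by (rule card_mono[OF finite_imageI[OF finSig] sub])
  also have "\<dots> \<le> card (SIGMA T:?TT. E - T)" by (rule card_image_le[OF finSig])
  also have "\<dots> = (\<Sum>T\<in>?TT. card (E - T))" by (rule card_SigmaI) (use finSS assms(1) in auto)
  also have "\<dots> = (\<Sum>T\<in>?TT. card E - k)"
  proof (rule sum.cong)
    fix T assume "T \<in> ?TT"
    then have "T \<subseteq> E" "card T = k" by auto
    then show "card (E - T) = card E - k" using card_Diff_subset[OF finite_subset[OF _ assms(1)]] by metis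
  qed simp
  also have "\<dots> = cnt E A k * (card E - k)" unfolding cnt_def by simp
  finally show ?thesis using cD by simp
qed

definition fracA :: "'a set \<Rightarrow> ('a set \<Rightarrow> bool) \<Rightarrow> nat \<Rightarrow> real" where
  "fracA E A k = real (cnt E A k) / real (card E choose k)"

lemma frac_aux:
  fixes a b c0 c1 s d :: nat
  assumes "c1 * s = c0 * d" "a * s \<le> b * d" "0 < c0" "0 < c1" "0 < d" "0 < s"
  shows "real a / real c1 \<le> real b / real c0"
proof -
  have "a * c0 * d = a * (c1 * s)" using assms(1) by (simp add: mult.assoc)
  also have "\<dots> = (a * s) * c1" by (simp add: ac_simps)
  also have "\<dots> \<le> (b * d) * c1" using assms(2) by simp
  finally have "(a * c0) * d \<le> (b * c1) * d" by (simp add: ac_simps)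
  then have "a * c0 \<le> b * c1" using assms(5) by simp
  then have "real a * real c0 \<le> real b * real c1" by (simp only: of_nat_mult[symmetric] of_nat_le_iff)
  then show ?thesis using assms(3,4) by (simp add: divide_simps)
qed
lemma frac_Suc:
  assumes "finite E" "down A"
  shows "fracA E A (Suc k) \<le> fracA E A k"
proof (cases "k < card E")
  case False
  then have h: "card E choose Suc k = 0" by simp
  show ?thesis unfolding fracA_def h by simp
next
  case True
  define N where "N = card E"
  have pos: "0 < N choose k" "0 < N choose Suc k" "0 < N - k" using True N_def by auto
  have id: "(N choose Suc k) * Suc k = (N choose k) * (N - k)"
  proof -
    have a: "Suc k * (N choose Suc k) = N * (N - 1 choose k)" by (rule binomial_absorption)
    have b: "(N - k) * (N choose k) = N * (N - 1 choose k)" by (rule binomial_absorb_comp)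
    show ?thesis using a b by (simp add: ac_simps)
  qed
  have d: "cnt E A (Suc k) * Suc k \<le> cnt E A k * (N - k)" using cnt_double[OF assms, of k] unfolding N_def .
  show ?thesis unfolding fracA_def N_def[symmetric]
    by (rule frac_aux[OF id d pos(1,2,3)]) simp
qed

lemma frac_mono:
  assumes "finite E" "down A" "j \<le> k"
  shows "fracA E A k \<le> fracA E A j"
proof -
  have "decseq (fracA E A)" by (rule decseq_SucI) (use frac_Suc[OF assms(1,2)] in auto)
  then show ?thesis using assms(3) by (simp add: decseqD)
qed

lemma Pr_by_card:
  assumes "finite E"
  shows "Pr p E A = (\<Sum>k\<le>card E. real (cnt E A k) * (p ^ k * (1 - p) ^ (card E - k)))"
proof -
  have fin: "finite {S. S \<subseteq> E \<and> A S}" using assms by (auto intro: finite_subset[of _ "Pow E"])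
  have im: "card ` {S. S \<subseteq> E \<and> A S} \<subseteq> {..card E}" using assms by (auto intro: card_mono)
  have "Pr p E A = (\<Sum>k\<le>card E. \<Sum>S\<in>{S \<in> {S. S \<subseteq> E \<and> A S}. card S = k}. p ^ card S * (1 - p) ^ (card E - card S))"
    unfolding Pr_def by (rule sum.group[symmetric, OF fin _ im]) simp
  also have "\<dots> = (\<Sum>k\<le>card E. real (cnt E A k) * (p ^ k * (1 - p) ^ (card E - k)))"
  proof (rule sum.cong)
    fix k
    have e: "{S \<in> {S. S \<subseteq> E \<and> A S}. card S = k} = {S. S \<subseteq> E \<and> card S = k \<and> A S}" by auto
    have "(\<Sum>S\<in>{S. S \<subseteq> E \<and> card S = k \<and> A S}. p ^ card S * (1 - p) ^ (card E - card S))
       = (\<Sum>S\<in>{S. S \<subseteq> E \<and> card S = k \<and> A S}. p ^ k * (1 - p) ^ (card E - k))"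
      by (rule sum.cong) auto
    then show "(\<Sum>S\<in>{S \<in> {S. S \<subseteq> E \<and> A S}. card S = k}. p ^ card S * (1 - p) ^ (card E - card S)) =
         real (cnt E A k) * (p ^ k * (1 - p) ^ (card E - k))"
      unfolding e cnt_def by simp
  qed simp
  finally show ?thesis .
qed

lemma binom_sum_one: "(\<Sum>k\<le>N. real (N choose k) * (p ^ k * (1 - p) ^ (N - k))) = 1"
  using binomial_ring[of p "1 - p" N] by (simp add: mult.assoc)


lemma Pr_conv:
  assumes "finite E" "down A" "m \<le> card E" "0 \<le> p" "p \<le> 1"
  shows "Pr p E A \<le> (\<Sum>k<m. real (card E choose k) * (p ^ k * (1 - p) ^ (card E - k))) + fracA E A m"
proof -
  define N where "N = card E"
  define w where "w k = real (N choose k) * (p ^ k * (1 - p) ^ (N - k))" for k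
  have wn: "0 \<le> w k" for k unfolding w_def using assms by simp
  have c: "real (cnt E A k) * (p ^ k * (1 - p) ^ (N - k)) = w k * fracA E A k" if "k \<le> N" for k
  proof -
    have "0 < N choose k" using that by simp
    then show ?thesis unfolding w_def fracA_def N_def[symmetric] by (simp add: field_simps)
  qed
  have fr1: "fracA E A k \<le> 1" for k
  proof (cases "N choose k = 0")
    case True then have h: "card E choose k = 0" unfolding N_def .
    show ?thesis unfolding fracA_def h by simp
  next
    case False then show ?thesis unfolding fracA_def N_def using cnt_le[OF assms(1), of A k]
      by (simp add: divide_le_eq_1)
  qed
  have "Pr p E A = (\<Sum>k\<le>N. w k * fracA E A k)"
    unfolding Pr_by_card[OF assms(1)] N_def[symmetric] by (rule sum.cong) (auto simp: c)
  also have "\<dots> = (\<Sum>k<m. w k * fracA E A k) + (\<Sum>k\<in>{m..N}. w k * fracA E A k)"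
  proof -
    have "{..N} = {..<m} \<union> {m..N}" using assms(3) N_def by auto
    then show ?thesis by (simp add: sum.union_disjoint ivl_disj_int)
  qed
  also have "\<dots> \<le> (\<Sum>k<m. w k) + (\<Sum>k\<in>{m..N}. w k * fracA E A m)"
  proof (rule add_mono)
    show "(\<Sum>k<m. w k * fracA E A k) \<le> (\<Sum>k<m. w k)"
      by (rule sum_mono) (use wn fr1 in \<open>simp add: mult_left_le\<close>)
    show "(\<Sum>k\<in>{m..N}. w k * fracA E A k) \<le> (\<Sum>k\<in>{m..N}. w k * fracA E A m)"
      by (rule sum_mono) (use wn frac_mono[OF assms(1,2)] in \<open>auto intro: mult_left_mono\<close>)
  qed
  also have "(\<Sum>k\<in>{m..N}. w k * fracA E A m) \<le> fracA E A m"
  proof -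
    have fn: "0 \<le> fracA E A m" unfolding fracA_def by simp
    have "(\<Sum>k\<in>{m..N}. w k) \<le> (\<Sum>k\<le>N. w k)" by (rule sum_mono2) (auto simp: wn)
    also have "\<dots> = 1" unfolding w_def by (rule binom_sum_one)
    finally show ?thesis using fn by (simp add: sum_distrib_right[symmetric] mult_left_le_one_le wn sum_nonneg)
  qed
  finally show ?thesis unfolding w_def N_def by simp
qed


lemma chernoff:
  assumes "0 \<le> p" "p \<le> 1" "0 < x" "x \<le> 1"
  shows "(\<Sum>k<m. real (N choose k) * (p ^ k * (1 - p) ^ (N - k))) \<le> (p * x + (1 - p)) ^ N / x ^ m"
proof -
  have "(\<Sum>k<m. real (N choose k) * (p ^ k * (1 - p) ^ (N - k)))
      \<le> (\<Sum>k<m. real (N choose k) * ((p * x) ^ k * (1 - p) ^ (N - k)) / x ^ m)"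
  proof (rule sum_mono)
    fix k assume "k \<in> {..<m}"
    then have "x ^ m \<le> x ^ k" using assms by (intro power_decreasing) auto
    then have "p ^ k * (1 - p) ^ (N - k) * x ^ m \<le> p ^ k * (1 - p) ^ (N - k) * x ^ k"
      using assms by (intro mult_left_mono) auto
    also have "\<dots> = (p * x) ^ k * (1 - p) ^ (N - k)" by (simp add: power_mult_distrib)
    finally have "p ^ k * (1 - p) ^ (N - k) \<le> (p * x) ^ k * (1 - p) ^ (N - k) / x ^ m"
      using assms by (simp add: pos_le_divide_eq)
    then show "real (N choose k) * (p ^ k * (1 - p) ^ (N - k)) \<le> real (N choose k) * ((p * x) ^ k * (1 - p) ^ (N - k)) / x ^ m"
      by (simp add: mult_left_mono times_divide_eq_right[symmetric] del: times_divide_eq_right)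
  qed
  also have "\<dots> = (\<Sum>k<m. real (N choose k) * ((p * x) ^ k * (1 - p) ^ (N - k))) / x ^ m"
    by (simp add: sum_divide_distrib)
  also have "\<dots> \<le> (\<Sum>k\<le>N. real (N choose k) * ((p * x) ^ k * (1 - p) ^ (N - k))) / x ^ m"
  proof -
    have "(\<Sum>k<m. real (N choose k) * ((p * x) ^ k * (1 - p) ^ (N - k))) \<le> (\<Sum>k\<le>N. real (N choose k) * ((p * x) ^ k * (1 - p) ^ (N - k)))"
    proof -
      have "(\<Sum>k<m. real (N choose k) * ((p * x) ^ k * (1 - p) ^ (N - k))) = (\<Sum>k\<in>{..<m} \<inter> {..N}. real (N choose k) * ((p * x) ^ k * (1 - p) ^ (N - k)))"
        by (rule sum.mono_neutral_right) auto
      also have "\<dots> \<le> (\<Sum>k\<le>N. real (N choose k) * ((p * x) ^ k * (1 - p) ^ (N - k)))"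
        by (rule sum_mono2) (use assms in auto)
      finally show ?thesis .
    qed
    then show ?thesis using assms by (simp add: divide_right_mono)
  qed
  also have "\<dots> = (p * x + (1 - p)) ^ N / x ^ m"
    using binomial_ring[of "p * x" "1 - p" N] by (simp add: mult.assoc)
  finally show ?thesis .
qed


lemma pg_mem_same_part:
  assumes D: "\<forall>i<r. \<forall>j<r. i \<noteq> j \<longrightarrow> V i \<inter> V j = {}"
    and "{a, b} \<in> partite_graph n r V" "k < r" "a \<in> V k" "b \<in> V k"
  shows False
proof -
  obtain x y i j where xy: "{a, b} = {x, y}" "i < r" "j < r" "i \<noteq> j" "x \<in> V i" "y \<in> V j"
    using assms(2) unfolding partite_graph_def by blast
  have "x \<in> V k" "y \<in> V k" using xy assms(4,5) by (auto simp: doubleton_eq_iff)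
  then have "i = k" "j = k" using D xy assms(3) by blast+
  then show False using xy by simp
qed

lemma pg_mem_ne:
  assumes D: "\<forall>i<r. \<forall>j<r. i \<noteq> j \<longrightarrow> V i \<inter> V j = {}"
    and "{a, b} \<in> partite_graph n r V"
  shows "a \<noteq> b"
proof -
  obtain x y i j where xy: "{a, b} = {x, y}" "i < r" "j < r" "i \<noteq> j" "x \<in> V i" "y \<in> V j"
    using assms(2) unfolding partite_graph_def by blast
  have "x \<noteq> y" using D xy by blast
  then show ?thesis using xy by (auto simp: doubleton_eq_iff)
qed

lemma pg_mem_intro:
  assumes U: "(\<Union>i<r. V i) = {1..n}"
    and "a \<in> V i" "b \<in> V j" "i < r" "j < r" "i \<noteq> j"
  shows "{a, b} \<in> partite_graph n r V"
proof -
  have "a \<in> {1..n}" "b \<in> {1..n}" using U assms by blast+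
  then show ?thesis unfolding partite_graph_def using assms by blast
qed

lemma pg_sub_all: 
  assumes D: "\<forall>i<r. \<forall>j<r. i \<noteq> j \<longrightarrow> V i \<inter> V j = {}"
  shows "partite_graph n r V \<subseteq> all_edges n"
proof
  fix T assume T: "T \<in> partite_graph n r V"
  then obtain a b where ab: "T = {a, b}" "a \<in> {1..n}" "b \<in> {1..n}"
    unfolding partite_graph_def by blast
  have "a \<noteq> b" using pg_mem_ne[OF D] T ab by blast
  then show "T \<in> all_edges n" unfolding all_edges_def using ab by blast
qed

lemma finite_all_edges: "finite (all_edges n)"
proof -
  have "all_edges n \<subseteq> (\<lambda>(u, v). {u, v}) ` ({1..n} \<times> {1..n})" unfolding all_edges_def by auto
  then show ?thesis by (rule finite_subset) simp
qed

lemma finite_pg: 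
  assumes D: "\<forall>i<r. \<forall>j<r. i \<noteq> j \<longrightarrow> V i \<inter> V j = {}"
  shows "finite (partite_graph n r V)"
  using pg_sub_all[OF D] finite_all_edges finite_subset by blast

lemma clique_transversal:
  assumes U: "(\<Union>i<r. V i) = {1..n}" and D: "\<forall>i<r. \<forall>j<r. i \<noteq> j \<longrightarrow> V i \<inter> V j = {}"
    and uv: "u \<in> V i" "v \<in> V i" "i < r" "u \<noteq> v" and G: "G \<subseteq> partite_graph n r V"
    and S: "S \<subseteq> {1..n}" "card S = r + 1" "\<forall>a\<in>S. \<forall>b\<in>S. a \<noteq> b \<longrightarrow> {a, b} \<in> insert {u, v} G"
  shows "\<exists>f\<in>Pi\<^sub>E {j. j < r \<and> j \<noteq> i} V. insert u (insert v (f ` {j. j < r \<and> j \<noteq> i})) \<subseteq> S"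
proof -
  define J where "J = {j. j < r \<and> j \<noteq> i}"
  have "\<forall>w\<in>{1..n}. \<exists>k. k < r \<and> w \<in> V k" using U by blast
  then obtain P where P: "\<And>w. w \<in> {1..n} \<Longrightarrow> P w < r \<and> w \<in> V (P w)" by metis
  have partu: "P w = k" if "w \<in> {1..n}" "k < r" "w \<in> V k" for w k
    using P[OF that(1)] that D by blast
  have same: "{a, b} = {u, v}" if "a \<in> S" "b \<in> S" "a \<noteq> b" "P a = P b" for a b
  proof -
    have ab: "{a, b} \<in> insert {u, v} G" using S that by blast
    have "a \<in> {1..n}" "b \<in> {1..n}" using that S by auto
    then have "P a < r" "a \<in> V (P a)" "b \<in> V (P a)" using P that(4) by metis+
    then have "{a, b} \<notin> partite_graph n r V" using pg_mem_same_part[OF D] by blast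
    then show ?thesis using ab G by blast
  qed
  have finS: "finite S" using S(1) finite_subset by blast
  have "\<not> inj_on P S"
  proof
    assume inj: "inj_on P S"
    have "P ` S \<subseteq> {..<r}" using P S(1) by auto
    then have "card (P ` S) \<le> r" by (metis card_lessThan card_mono finite_lessThan)
    then show False using card_image[OF inj] S(2) by simp
  qed
  then obtain a b where "a \<in> S" "b \<in> S" "a \<noteq> b" "P a = P b" unfolding inj_on_def by blast
  then have "{a, b} = {u, v}" using same by blast
  then have uvS: "u \<in> S" "v \<in> S" using \<open>a \<in> S\<close> \<open>b \<in> S\<close> by (auto simp: doubleton_eq_iff)
  define S' where "S' = S - {u, v}"
  have cS': "card S' = r - 1" unfolding S'_def using uvS uv(4) S(2) finS
    by (subst card_Diff_subset) auto
  have injS': "inj_on P S'"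
  proof (rule inj_onI)
    fix a b assume ab: "a \<in> S'" "b \<in> S'" "P a = P b"
    show "a = b"
    proof (rule ccontr)
      assume "a \<noteq> b"
      then have "{a, b} = {u, v}" using same ab unfolding S'_def by blast
      then show False using ab unfolding S'_def by (auto simp: doubleton_eq_iff)
    qed
  qed
  have Pu: "P u = i" using partu uv S(1) uvS by blast
  have PS'J: "P ` S' \<subseteq> J"
  proof
    fix k assume "k \<in> P ` S'"
    then obtain w where w: "w \<in> S'" "k = P w" by blast
    have wn: "w \<in> {1..n}" using w S(1) unfolding S'_def by blast
    have "P w \<noteq> i"
    proof
      assume "P w = i"
      then have "{w, u} = {u, v}" using same[of w u] w uvS Pu unfolding S'_def by auto
      then show False using w unfolding S'_def by (auto simp: doubleton_eq_iff)
    qed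
    then show "k \<in> J" using P[OF wn] w unfolding J_def by auto
  qed
  have cJ: "card J = r - 1"
  proof -
    have "J = {..<r} - {i}" unfolding J_def by auto
    then show ?thesis using uv(3) by simp
  qed
  have finJ: "finite J" unfolding J_def by simp
  have PS': "P ` S' = J"
    by (rule card_subset_eq[OF finJ PS'J]) (simp add: card_image[OF injS'] cS' cJ)
  define f where "f = (\<lambda>j. if j \<in> J then the_inv_into S' P j else undefined)"
  have fj: "f j \<in> S' \<and> P (f j) = j" if "j \<in> J" for j
  proof -
    have "j \<in> P ` S'" using PS' that by simp
    then show ?thesis unfolding f_def using that
      by (simp add: the_inv_into_into[OF injS'] f_the_inv_into_f[OF injS'])
  qed
  have "f \<in> Pi\<^sub>E J V"
  proof (rule PiE_I)
    fix j assume j: "j \<in> J"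
    then have "f j \<in> {1..n}" using fj S(1) unfolding S'_def by blast
    then show "f j \<in> V j" using P fj j by metis
  next
    fix j assume "j \<notin> J" then show "f j = undefined" unfolding f_def by simp
  qed
  moreover have "insert u (insert v (f ` J)) \<subseteq> S" using fj uvS unfolding S'_def by auto
  ultimately show ?thesis unfolding J_def by blast
qed


definition Bset :: "nat \<Rightarrow> nat \<Rightarrow> nat \<Rightarrow> nat \<Rightarrow> (nat \<Rightarrow> nat) \<Rightarrow> nat set set" where
  "Bset r i u v f = {T. T \<subseteq> insert u (insert v (f ` {j. j < r \<and> j \<noteq> i})) \<and> card T = 2} - {{u, v}}"

definition Aev :: "nat \<Rightarrow> (nat \<Rightarrow> nat set) \<Rightarrow> nat \<Rightarrow> nat \<Rightarrow> nat \<Rightarrow> nat set set \<Rightarrow> bool" where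
  "Aev r V i u v G \<longleftrightarrow> (\<forall>f\<in>Pi\<^sub>E {j. j < r \<and> j \<noteq> i} V. \<not> Bset r i u v f \<subseteq> G)"

lemma down_Aev: "down (Aev r V i u v)"
  unfolding down_def Aev_def by blast

lemma Bset_props:
  assumes U: "(\<Union>i<r. V i) = {1..n}" and D: "\<forall>i<r. \<forall>j<r. i \<noteq> j \<longrightarrow> V i \<inter> V j = {}"
    and uv: "u \<in> V i" "v \<in> V i" "i < r" "u \<noteq> v"
    and f: "f \<in> Pi\<^sub>E {j. j < r \<and> j \<noteq> i} V"
  shows "Bset r i u v f \<subseteq> partite_graph n r V" "card (Bset r i u v f) = (r + 1 choose 2) - 1"
proof -
  define J where "J = {j. j < r \<and> j \<noteq> i}"
  define W where "W = insert u (insert v (f ` J))"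
  have fJ: "f j \<in> V j" if "j \<in> J" for j using f that unfolding J_def by auto
  have injf: "inj_on f J"
  proof (rule inj_onI)
    fix j k assume jk: "j \<in> J" "k \<in> J" "f j = f k"
    show "j = k"
    proof (rule ccontr)
      assume "j \<noteq> k"
      then have "V j \<inter> V k = {}" using D jk(1,2) unfolding J_def by auto
      moreover have "f j \<in> V j" using fJ jk(1) by blast
      moreover have "f k \<in> V k" using fJ jk(2) by blast
      ultimately show False using jk(3) by auto
    qed
  qed
  have nuv: "w \<notin> f ` J" if "w \<in> V i" for w
  proof
    assume "w \<in> f ` J"
    then obtain j where j: "j \<in> J" "w = f j" by blast
    then have "V i \<inter> V j = {}" using D uv(3) unfolding J_def by auto
    moreover have "f j \<in> V j" using fJ j by auto
    ultimately show False using j that by auto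
  qed
  have uvf: "u \<notin> f ` J" "v \<notin> f ` J" using nuv uv by auto
  have cJ: "card J = r - 1"
  proof -
    have "J = {..<r} - {i}" unfolding J_def by auto
    then show ?thesis using uv(3) by simp
  qed
  have finJ: "finite J" unfolding J_def by simp
  have cW: "card W = r + 1"
  proof -
    have "card (f ` J) = r - 1" using card_image[OF injf] cJ by simp
    moreover have "u \<notin> insert v (f ` J)" using uvf uv(4) by simp
    ultimately show ?thesis unfolding W_def using uvf(2) finJ uv(3) by simp
  qed
  have finW: "finite W" unfolding W_def using finJ by simp
  have B: "Bset r i u v f = {T. T \<subseteq> W \<and> card T = 2} - {{u, v}}"
    unfolding Bset_def W_def J_def by simp
  show "Bset r i u v f \<subseteq> partite_graph n r V"
  proof
    fix T assume "T \<in> Bset r i u v f"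
    then have T: "T \<subseteq> W" "card T = 2" "T \<noteq> {u, v}" unfolding B by auto
    then obtain a b where ab: "T = {a, b}" "a \<noteq> b" by (meson card_2_iff)
    have aW: "a \<in> W" "b \<in> W" using T ab by auto
    have part: "\<exists>k. k < r \<and> w \<in> V k \<and> (w \<in> {u, v} \<longrightarrow> k = i) \<and> (\<forall>j\<in>J. w = f j \<longrightarrow> k = j)" if wW: "w \<in> W" for w
    proof (cases "w \<in> {u, v}")
      case True then show ?thesis using uv uvf by auto
    next
      case False
      then obtain j where j: "j \<in> J" "w = f j" using wW unfolding W_def by auto
      have "\<forall>j'\<in>J. w = f j' \<longrightarrow> j = j'" using injf j unfolding inj_on_def by metis
      then show ?thesis using j fJ False unfolding J_def by auto
    qed
    obtain ka where ka: "ka < r" "a \<in> V ka" "a \<in> {u, v} \<longrightarrow> ka = i" "\<forall>j\<in>J. a = f j \<longrightarrow> ka = j"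
      using part[OF aW(1)] by blast
    obtain kb where kb: "kb < r" "b \<in> V kb" "b \<in> {u, v} \<longrightarrow> kb = i" "\<forall>j\<in>J. b = f j \<longrightarrow> kb = j"
      using part[OF aW(2)] by blast
    have "ka \<noteq> kb"
    proof
      assume eq: "ka = kb"
      show False
      proof (cases "a \<in> {u, v}")
        case True
        then have "ka = i" using ka by simp
        show False
        proof (cases "b \<in> {u, v}")
          case True
          then have "T = {u, v}" using \<open>a \<in> {u, v}\<close> ab by auto
          then show False using T by simp
        next
          case False
          then obtain j where j: "j \<in> J" "b = f j" using aW unfolding W_def by auto
          then have "kb = j" using kb by blast
          then show False using j eq \<open>ka = i\<close> unfolding J_def by simp
        qed
      next
        case False
        then obtain j where j: "j \<in> J" "a = f j" using aW unfolding W_def by auto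
        then have kaj: "ka = j" using ka by blast
        show False
        proof (cases "b \<in> {u, v}")
          case True
          then have "kb = i" using kb by simp
          then show False using j eq kaj unfolding J_def by simp
        next
          case False
          then obtain j' where j': "j' \<in> J" "b = f j'" using aW unfolding W_def by auto
          then have "kb = j'" using kb by blast
          then show False using j j' eq kaj ab by auto
        qed
      qed
    qed
    then show "T \<in> partite_graph n r V" unfolding ab using pg_mem_intro[OF U ka(2) kb(2) ka(1) kb(1)] by blast
  qed
  have "card {T. T \<subseteq> W \<and> card T = 2} = (r + 1 choose 2)" using n_subsets[OF finW, of 2] cW by simp
  moreover have "{u, v} \<in> {T. T \<subseteq> W \<and> card T = 2}" unfolding W_def using uv(4) by auto
  moreover have "finite {T. T \<subseteq> W \<and> card T = 2}" using finW by (auto intro: finite_subset[of _ "Pow W"])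
  ultimately show "card (Bset r i u v f) = (r + 1 choose 2) - 1" unfolding B by (simp add: card_Diff_singleton)
qed

lemma Aev_free:
  assumes U: "(\<Union>i<r. V i) = {1..n}" and D: "\<forall>i<r. \<forall>j<r. i \<noteq> j \<longrightarrow> V i \<inter> V j = {}"
    and uv: "u \<in> V i" "v \<in> V i" "i < r" "u \<noteq> v" and G: "G \<subseteq> partite_graph n r V"
    and A: "Aev r V i u v G"
  shows "\<not> has_clique n (r + 1) (insert {u, v} G)"
proof
  assume "has_clique n (r + 1) (insert {u, v} G)"
  then obtain S where S: "S \<subseteq> {1..n}" "card S = r + 1" "\<forall>a\<in>S. \<forall>b\<in>S. a \<noteq> b \<longrightarrow> {a, b} \<in> insert {u, v} G"
    unfolding has_clique_def by blast
  obtain f where f: "f \<in> Pi\<^sub>E {j. j < r \<and> j \<noteq> i} V" "insert u (insert v (f ` {j. j < r \<and> j \<noteq> i})) \<subseteq> S"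
    using clique_transversal[OF U D uv G S] by blast
  have "Bset r i u v f \<subseteq> G"
  proof
    fix T assume "T \<in> Bset r i u v f"
    then have T: "T \<subseteq> S" "card T = 2" "T \<noteq> {u, v}" unfolding Bset_def using f(2) by auto
    then obtain a b where ab: "T = {a, b}" "a \<noteq> b" by (meson card_2_iff)
    then have "{a, b} \<in> insert {u, v} G" using S(3) T by auto
    then show "T \<in> G" using ab T by auto
  qed
  then show False using A f(1) unfolding Aev_def by blast
qed

lemma count_lower:
  assumes U: "(\<Union>i<r. V i) = {1..n}" and D: "\<forall>i<r. \<forall>j<r. i \<noteq> j \<longrightarrow> V i \<inter> V j = {}"
    and uv: "u \<in> V i" "v \<in> V i" "i < r" "u \<noteq> v" and m: "1 \<le> m"
    and e: "e = {u, v}"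
  shows "cnt (partite_graph n r V) (Aev r V i u v) (m - 1) \<le> card (G_plus n r V m e \<inter> F_free n m r)"
proof -
  define E where "E = partite_graph n r V"
  define X where "X = {G. G \<subseteq> E \<and> card G = m - 1 \<and> Aev r V i u v G}"
  have finE: "finite E" unfolding E_def by (rule finite_pg[OF D])
  have eE: "e \<notin> E" unfolding E_def e using pg_mem_same_part[OF D _ uv(3,1,2)] by blast
  have inj: "inj_on (insert e) X"
  proof (rule inj_onI)
    fix G H assume "G \<in> X" "H \<in> X" "insert e G = insert e H"
    then show "G = H" using eE unfolding X_def by (metis insert_ident subsetD mem_Collect_eq)
  qed
  have sub: "insert e ` X \<subseteq> G_plus n r V m e \<inter> F_free n m r"
  proof
    fix H assume "H \<in> insert e ` X"
    then obtain G where G: "H = insert e G" "G \<subseteq> E" "card G = m - 1" "Aev r V i u v G"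
      unfolding X_def by blast
    have "H \<in> G_plus n r V m e" unfolding G_plus_def G_sub_def E_def[symmetric] using G by blast
    moreover have "H \<in> F_free n m r"
    proof -
      have "e \<in> all_edges n"
      proof -
        have "u \<in> {1..n}" "v \<in> {1..n}" using U uv by blast+
        then show ?thesis unfolding all_edges_def e using uv(4) by blast
      qed
      moreover have "G \<subseteq> all_edges n" using G(2) pg_sub_all[OF D] unfolding E_def by blast
      moreover have "card H = m"
      proof -
        have "finite G" using G(2) finE finite_subset by blast
        moreover have "e \<notin> G" using G(2) eE by blast
        ultimately show ?thesis using G(1,3) m by simp
      qed
      moreover have "\<not> has_clique n (r + 1) H"
        using Aev_free[OF U D uv _ G(4)] G(1,2) unfolding E_def e by blast
      ultimately show ?thesis unfolding F_free_def using G(1) by blast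
    qed
    ultimately show "H \<in> G_plus n r V m e \<inter> F_free n m r" by blast
  qed
  have fin: "finite (G_plus n r V m e \<inter> F_free n m r)"
  proof -
    have "G_sub n r V (m - 1) \<subseteq> Pow E" unfolding G_sub_def E_def by blast
    then have "finite (G_sub n r V (m - 1))" using finE finite_subset by blast
    then show ?thesis unfolding G_plus_def by blast
  qed
  have "cnt E (Aev r V i u v) (m - 1) = card X" unfolding cnt_def X_def by simp
  also have "\<dots> = card (insert e ` X)" using card_image[OF inj] by simp
  also have "\<dots> \<le> card (G_plus n r V m e \<inter> F_free n m r)" by (rule card_mono[OF fin sub])
  finally show ?thesis unfolding E_def .
qed


lemma pair_inj_lt: "inj_on (\<lambda>(a, b). {a, b}) {(a, b). (a::nat) < b}"
proof (rule inj_onI)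
  fix x y :: "nat \<times> nat" assume "x \<in> {(a, b). a < b}" "y \<in> {(a, b). a < b}"
    "(\<lambda>(a, b). {a, b}) x = (\<lambda>(a, b). {a, b}) y"
  then show "x = y" by (cases x, cases y) (auto simp: doubleton_eq_iff)
qed

lemma pair_inj_gt: "inj_on (\<lambda>(a, b). {a, b}) {(a, b). (b::nat) < a}"
proof (rule inj_onI)
  fix x y :: "nat \<times> nat" assume "x \<in> {(a, b). b < a}" "y \<in> {(a, b). b < a}"
    "(\<lambda>(a, b). {a, b}) x = (\<lambda>(a, b). {a, b}) y"
  then show "x = y" by (cases x, cases y) (auto simp: doubleton_eq_iff)
qed

lemma edges_lower:
  assumes P: "in_Pnr n r \<gamma> V"
  shows "real n * real n * (1 - 1 / real r - \<gamma>) \<le> 2 * real (card (partite_graph n r V))"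
proof -
  have U: "(\<Union>i<r. V i) = {1..n}" and D: "\<forall>i<r. \<forall>j<r. i \<noteq> j \<longrightarrow> V i \<inter> V j = {}"
    and C: "\<forall>i<r. real (card (V i)) \<le> (1 / real r + \<gamma>) * real n"
    using P unfolding in_Pnr_def by auto
  define E where "E = partite_graph n r V"
  define Ord where "Ord = (\<Union>k<r. V k \<times> ({1..n} - V k))"
  have Vsub: "V k \<subseteq> {1..n}" if "k < r" for k using U that by blast
  have finV: "finite (V k)" if "k < r" for k using Vsub[OF that] finite_subset by blast
  have disjO: "\<forall>k\<in>{..<r}. \<forall>l\<in>{..<r}. k \<noteq> l \<longrightarrow> (V k \<times> ({1..n} - V k)) \<inter> (V l \<times> ({1..n} - V l)) = {}"
    using D by blast
  have cO: "card Ord = (\<Sum>k<r. card (V k \<times> ({1..n} - V k)))"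
    unfolding Ord_def by (rule card_UN_disjoint) (use finV disjO in auto)
  have cO2: "card (V k \<times> ({1..n} - V k)) = card (V k) * (n - card (V k))" if "k < r" for k
    using Vsub[OF that] finV[OF that] by (simp add: card_cartesian_product card_Diff_subset)
  have sumV: "(\<Sum>k<r. card (V k)) = n"
  proof -
    have "card (\<Union>k<r. V k) = (\<Sum>k<r. card (V k))"
      by (rule card_UN_disjoint) (use finV D in auto)
    then show ?thesis using U by simp
  qed
  have cVn: "card (V k) \<le> n" if "k < r" for k using card_mono[OF _ Vsub[OF that]] by simp
  have "real n * real n * (1 - 1 / real r - \<gamma>) = (\<Sum>k<r. real (card (V k))) * (real n - (1 / real r + \<gamma>) * real n)"
    using sumV by (simp add: algebra_simps flip: of_nat_sum)
  also have "\<dots> = (\<Sum>k<r. real (card (V k)) * (real n - (1 / real r + \<gamma>) * real n))"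
    by (simp add: sum_distrib_right)
  also have "\<dots> \<le> (\<Sum>k<r. real (card (V k)) * (real n - real (card (V k))))"
    by (rule sum_mono) (use C in \<open>auto intro!: mult_left_mono\<close>)
  also have "\<dots> = (\<Sum>k<r. real (card (V k \<times> ({1..n} - V k))))"
  proof (rule sum.cong)
    fix k assume "k \<in> {..<r}"
    then have "k < r" by simp
    show "real (card (V k)) * (real n - real (card (V k))) = real (card (V k \<times> ({1..n} - V k)))"
      unfolding cO2[OF \<open>k < r\<close>] using cVn[OF \<open>k < r\<close>] by (simp add: of_nat_diff)
  qed simp
  also have "\<dots> = real (card Ord)"
    unfolding cO by simp
  finally have L: "real n * real n * (1 - 1 / real r - \<gamma>) \<le> real (card Ord)" .
  define Q1 where "Q1 = Ord \<inter> {(a, b). a < b}"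
  define Q2 where "Q2 = Ord \<inter> {(a, b). b < a}"
  have finOO: "finite Ord" unfolding Ord_def using finV by auto
  have neq: "a \<noteq> b" if "(a, b) \<in> Ord" for a b using that unfolding Ord_def by auto
  have OrdU: "Ord \<subseteq> Q1 \<union> Q2"
  proof
    fix x assume x: "x \<in> Ord"
    obtain a b where ab: "x = (a, b)" by (cases x)
    have "a \<noteq> b" using neq x ab by blast
    then show "x \<in> Q1 \<union> Q2" unfolding Q1_def Q2_def using x ab by (auto simp: nat_neq_iff)
  qed
  have imO: "(\<lambda>(a, b). {a, b}) ` Ord \<subseteq> E"
  proof
    fix T assume "T \<in> (\<lambda>(a, b). {a, b}) ` Ord"
    then obtain x where x: "x \<in> Ord" "T = (\<lambda>(a, b). {a, b}) x" by blast
    obtain a b where x2: "x = (a, b)" by (cases x)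
    have "(a, b) \<in> Ord" using x x2 by simp
    then obtain k where k: "k < r" "a \<in> V k" "b \<in> {1..n}" "b \<notin> V k" unfolding Ord_def by blast
    have ab: "T = {a, b}" "k < r" "a \<in> V k" "b \<in> {1..n}" "b \<notin> V k" using x x2 k by auto
    obtain l where l: "l < r" "b \<in> V l" using ab U by blast
    then have "l \<noteq> k" using ab by blast
    then show "T \<in> E" unfolding E_def ab using pg_mem_intro[OF U ab(3) l(2) ab(2) l(1)] by simp
  qed
  have finE: "finite E" unfolding E_def by (rule finite_pg[OF D])
  have c1: "card Q1 \<le> card E"
  proof -
    have "inj_on (\<lambda>(a, b). {a, b}) Q1" by (rule inj_on_subset[OF pair_inj_lt]) (auto simp: Q1_def)
    then have "card Q1 = card ((\<lambda>(a, b). {a, b}) ` Q1)" by (simp add: card_image)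
    also have "\<dots> \<le> card E" by (rule card_mono[OF finE]) (use imO in \<open>auto simp: Q1_def\<close>)
    finally show ?thesis .
  qed
  have c2: "card Q2 \<le> card E"
  proof -
    have "inj_on (\<lambda>(a, b). {a, b}) Q2" by (rule inj_on_subset[OF pair_inj_gt]) (auto simp: Q2_def)
    then have "card Q2 = card ((\<lambda>(a, b). {a, b}) ` Q2)" by (simp add: card_image)
    also have "\<dots> \<le> card E" by (rule card_mono[OF finE]) (use imO in \<open>auto simp: Q2_def\<close>)
    finally show ?thesis .
  qed
  have "card Ord \<le> card (Q1 \<union> Q2)" by (rule card_mono) (use finOO OrdU in \<open>auto simp: Q1_def Q2_def\<close>)
  also have "\<dots> \<le> card Q1 + card Q2" by (rule card_Un_le)
  finally have "card Ord \<le> 2 * card E" using c1 c2 by simp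
  then show ?thesis using L unfolding E_def by linarith
qed

lemma M_upper:
  assumes P: "in_Pnr n r \<gamma> V" and i: "i < r"
  shows "real (card (Pi\<^sub>E {j. j < r \<and> j \<noteq> i} V)) \<le> ((1 / real r + \<gamma>) * real n) ^ (r - 1)"
proof -
  have C: "\<forall>i<r. real (card (V i)) \<le> (1 / real r + \<gamma>) * real n"
    using P unfolding in_Pnr_def by auto
  define J where "J = {j. j < r \<and> j \<noteq> i}"
  have cJ: "card J = r - 1"
  proof -
    have "J = {..<r} - {i}" unfolding J_def by auto
    then show ?thesis using i by simp
  qed
  have finJ: "finite J" unfolding J_def by simp
  have "real (card (Pi\<^sub>E J V)) = (\<Prod>j\<in>J. real (card (V j)))" by (simp add: card_PiE[OF finJ])
  also have "\<dots> \<le> (\<Prod>j\<in>J. (1 / real r + \<gamma>) * real n)"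
    by (rule prod_mono) (use C in \<open>auto simp: J_def\<close>)
  also have "\<dots> = ((1 / real r + \<gamma>) * real n) ^ (r - 1)" using cJ by simp
  finally show ?thesis unfolding J_def .
qed


lemma pow_exp_lower:
  assumes "0 \<le> t" "t < 1"
  shows "exp (- real M * t / (1 - t)) \<le> (1 - t) ^ M"
proof -
  have "1 - 1 / (1 - t) \<le> ln (1 - t)"
  proof -
    have "ln (1 / (1 - t)) \<le> 1 / (1 - t) - 1" using assms by (intro ln_le_minus_one) simp
    then show ?thesis using assms by (simp add: ln_div)
  qed
  moreover have "1 - 1 / (1 - t) = - t / (1 - t)" using assms by (simp add: field_simps)
  ultimately have "- t / (1 - t) \<le> ln (1 - t)" by simp
  then have "real M * (- t / (1 - t)) \<le> real M * ln (1 - t)" by (rule mult_left_mono) simp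
  then have "- real M * t / (1 - t) \<le> real M * ln (1 - t)" by simp
  then have "exp (- real M * t / (1 - t)) \<le> exp (real M * ln (1 - t))" by simp
  also have "\<dots> = (1 - t) ^ M" using assms by (simp add: exp_of_nat_mult)
  finally show ?thesis .
qed

lemma key:
  assumes P: "in_Pnr n r \<gamma> V" and e: "e \<in> partite_compl n r V"
    and m: "1 \<le> m" "m - 1 \<le> card (partite_graph n r V)"
    and p: "0 \<le> p" "p < 1" and g: "0 \<le> 1 / real r + \<gamma>" and r: "2 \<le> r"
  shows "exp (- (((1 / real r + \<gamma>) * real n) ^ (r - 1)) * p ^ ((r + 1 choose 2) - 1) / (1 - p ^ ((r + 1 choose 2) - 1)))
     - (\<Sum>k<m - 1. real (card (partite_graph n r V) choose k) * (p ^ k * (1 - p) ^ (card (partite_graph n r V) - k)))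
     \<le> real (card (G_plus n r V m e \<inter> F_free n m r)) / real (card (partite_graph n r V) choose (m - 1))"
proof -
  have U: "(\<Union>i<r. V i) = {1..n}" and D: "\<forall>i<r. \<forall>j<r. i \<noteq> j \<longrightarrow> V i \<inter> V j = {}"
    using P unfolding in_Pnr_def by auto
  obtain u v i where uv: "e = {u, v}" "u \<in> V i" "v \<in> V i" "i < r" "u \<noteq> v"
    using e unfolding partite_compl_def by blast
  define E where "E = partite_graph n r V"
  define s where "s = (r + 1 choose 2) - 1"
  define I where "I = Pi\<^sub>E {j. j < r \<and> j \<noteq> i} V"
  define t where "t = p ^ s"
  have finE: "finite E" unfolding E_def by (rule finite_pg[OF D])
  have finI: "finite I"
  proof -
    have "\<forall>j\<in>{j. j < r \<and> j \<noteq> i}. finite (V j)"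
    proof
      fix j assume "j \<in> {j. j < r \<and> j \<noteq> i}"
      then have "V j \<subseteq> {1..n}" using U by auto
      then show "finite (V j)" using finite_subset by blast
    qed
    then show ?thesis unfolding I_def by (intro finite_PiE) auto
  qed
  have t: "0 \<le> t" "t < 1"
  proof -
    show "0 \<le> t" unfolding t_def using p by simp
    have "s \<noteq> 0"
    proof -
      have a: "3 * 2 \<le> (r + 1) * r" using r by (intro mult_le_mono) auto
      have "3 \<le> (r + 1) * r div 2" using div_le_mono[OF a, of 2] by simp
      then have "3 \<le> r + 1 choose 2" by (simp add: choose_two)
      then show ?thesis unfolding s_def by simp
    qed
    then show "t < 1" unfolding t_def using p by (simp add: power_less_one_iff)
  qed
  have "(\<Prod>f\<in>I. Pr p E (\<lambda>G. \<not> Bset r i u v f \<subseteq> G)) \<le> Pr p E (\<lambda>G. \<forall>f\<in>I. \<not> Bset r i u v f \<subseteq> G)"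
    by (rule harris_prod[OF finE p(1) _ finI]) (use p in \<open>auto simp: down_def\<close>)
  also have "(\<lambda>G. \<forall>f\<in>I. \<not> Bset r i u v f \<subseteq> G) = Aev r V i u v" unfolding Aev_def I_def by simp
  finally have h1: "(\<Prod>f\<in>I. Pr p E (\<lambda>G. \<not> Bset r i u v f \<subseteq> G)) \<le> Pr p E (Aev r V i u v)" .
  have "(\<Prod>f\<in>I. Pr p E (\<lambda>G. \<not> Bset r i u v f \<subseteq> G)) = (\<Prod>f\<in>I. 1 - t)"
  proof (rule prod.cong)
    fix f assume f: "f \<in> I"
    have B: "Bset r i u v f \<subseteq> E" "card (Bset r i u v f) = s"
      using Bset_props[OF U D uv(2-5), of f] f unfolding I_def E_def s_def by auto
    show "Pr p E (\<lambda>G. \<not> Bset r i u v f \<subseteq> G) = 1 - t"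
      unfolding Pr_not[OF finE] Pr_sup[OF finE B(1)] B(2) t_def ..
  qed simp
  also have "\<dots> = (1 - t) ^ card I" by simp
  finally have h2: "(1 - t) ^ card I \<le> Pr p E (Aev r V i u v)" using h1 by simp
  have MI: "real (card I) \<le> ((1 / real r + \<gamma>) * real n) ^ (r - 1)"
    unfolding I_def by (rule M_upper[OF P uv(4)])
  have "exp (- (((1 / real r + \<gamma>) * real n) ^ (r - 1)) * t / (1 - t)) \<le> exp (- real (card I) * t / (1 - t))"
    using MI t by (simp add: divide_right_mono mult_right_mono)
  also have "\<dots> \<le> (1 - t) ^ card I" by (rule pow_exp_lower[OF t])
  finally have h3: "exp (- (((1 / real r + \<gamma>) * real n) ^ (r - 1)) * t / (1 - t)) \<le> Pr p E (Aev r V i u v)"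
    using h2 by linarith
  have h4: "Pr p E (Aev r V i u v) \<le> (\<Sum>k<m - 1. real (card E choose k) * (p ^ k * (1 - p) ^ (card E - k))) + fracA E (Aev r V i u v) (m - 1)"
    by (rule Pr_conv[OF finE down_Aev]) (use m p E_def in auto)
  have h5: "fracA E (Aev r V i u v) (m - 1) \<le> real (card (G_plus n r V m e \<inter> F_free n m r)) / real (card E choose (m - 1))"
    unfolding fracA_def E_def
    by (rule divide_right_mono) (use count_lower[OF U D uv(2-5) m(1) uv(1)] in simp_all)
  show ?thesis using h3 h4 h5 unfolding E_def[symmetric] s_def[symmetric] t_def[symmetric] by linarith
qed


lemma s_real:
  assumes "2 \<le> r"
  shows "real ((r + 1 choose 2) - 1) = (real r + 2) * (real r - 1) / 2"
proof -
  have e: "real (r + 1 choose 2) = (real r + 1) * real r / 2"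
  proof -
    have "even ((r + 1) * r)" by simp
    then have "real ((r + 1) * r div 2) = real ((r + 1) * r) / 2" by (simp add: real_of_nat_div)
    then show ?thesis by (simp add: choose_two algebra_simps)
  qed
  have "0 < r + 1 choose 2" using assms zero_less_binomial_iff[of "r + 1" 2] by linarith
  then have "1 \<le> r + 1 choose 2" by linarith
  then have "real ((r + 1 choose 2) - 1) = real (r + 1 choose 2) - 1" by (simp add: of_nat_diff)
  then show ?thesis using e by (simp add: field_simps)
qed

lemma theta_id:
  assumes r: "2 \<le> r"
  shows "(theta r / ((real r - 1) / (2 * real r))) ^ ((r + 1 choose 2) - 1)
       = real r ^ (r - 1) * ((2 * real r + 2) / (real r + 2))"
proof -
  define c0 where "c0 = (real r - 1) / (2 * real r)"
  define A where "A = (2 * real r + 2) / (real r + 2)"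
  define Y where "Y = real r * A powr (1 / (real r - 1))"
  define sN where "sN = (r + 1 choose 2) - 1"
  have rr: "real r \<ge> 2" using r by simp
  have c0: "c0 > 0" unfolding c0_def using rr by simp
  have A: "A > 0" unfolding A_def using rr by simp
  have Y: "Y > 0" unfolding Y_def using rr A by simp
  have th: "theta r = c0 * Y powr (2 / (real r + 2))" unfolding theta_def c0_def Y_def A_def ..
  have sN: "real sN = (real r + 2) * (real r - 1) / 2" unfolding sN_def by (rule s_real[OF r])
  have "(theta r / c0) ^ sN = (Y powr (2 / (real r + 2))) ^ sN" using c0 th by simp
  also have "\<dots> = Y powr (real sN * (2 / (real r + 2)))" using Y by (simp add: powr_power)
  also have "real sN * (2 / (real r + 2)) = real (r - 1)" using sN rr by (simp add: field_simps of_nat_diff)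
  also have "Y powr real (r - 1) = Y ^ (r - 1)" using Y by (rule powr_realpow)
  also have "\<dots> = real r ^ (r - 1) * (A powr (1 / (real r - 1))) ^ (r - 1)" unfolding Y_def by (simp add: power_mult_distrib)
  also have "(A powr (1 / (real r - 1))) ^ (r - 1) = A powr (real (r - 1) * (1 / (real r - 1)))"
    using A by (simp add: powr_power)
  also have "real (r - 1) * (1 / (real r - 1)) = 1" using rr by (simp add: of_nat_diff)
  finally show ?thesis using A unfolding c0_def A_def sN_def by simp
qed

lemma mr_id:
  assumes r: "2 \<le> r" and n: "2 \<le> n"
  shows "(real n / real r) ^ (r - 1) * (m_r r n / ((real r - 1) / (2 * real r) * real n ^ 2)) ^ ((r + 1 choose 2) - 1)
       = (2 * real r + 2) / (real r + 2) * ln (real n)"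
proof -
  define c0 where "c0 = (real r - 1) / (2 * real r)"
  define A where "A = (2 * real r + 2) / (real r + 2)"
  define sN where "sN = (r + 1 choose 2) - 1"
  define L where "L = ln (real n)"
  define a where "a = 2 - 2 / (real r + 2)"
  have rr: "real r \<ge> 2" using r by simp
  have nn: "real n \<ge> 2" using n by simp
  have L: "L > 0" unfolding L_def using nn by simp
  have c0: "c0 > 0" unfolding c0_def using rr by simp
  have sN: "real sN = (real r + 2) * (real r - 1) / 2" unfolding sN_def by (rule s_real[OF r])
  have sNpos: "real sN > 0"
  proof -
    have "(real r + 2) * (real r - 1) > 0" using rr by (intro mult_pos_pos) auto
    then show ?thesis unfolding sN by simp
  qed
  have Cs: "real (r + 1 choose 2) - 1 = real sN"
  proof -
    have "0 < r + 1 choose 2" using r zero_less_binomial_iff[of "r + 1" 2] by linarith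
    then have "1 \<le> r + 1 choose 2" by linarith
    then have "real ((r + 1 choose 2) - 1) = real (r + 1 choose 2) - real (1::nat)" by (rule of_nat_diff)
    then show ?thesis unfolding sN_def by simp
  qed
  have mr: "m_r r n = theta r * real n powr a * L powr (1 / real sN)"
    unfolding m_r_def a_def L_def Cs ..
  have e1: "m_r r n / (c0 * real n ^ 2) = (theta r / c0) * (real n powr (a - 2)) * L powr (1 / real sN)"
  proof -
    have "real n powr (real 2) = real n ^ 2" by (rule powr_realpow) (use nn in simp)
    then have "real n ^ 2 = real n powr 2" by simp
    then have pd: "real n powr a / real n ^ 2 = real n powr (a - 2)" by (simp add: powr_diff)
    have "m_r r n / (c0 * real n ^ 2) = (theta r / c0) * (real n powr a / real n ^ 2) * L powr (1 / real sN)"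
      unfolding mr using c0 nn by (simp add: field_simps)
    then show ?thesis unfolding pd .
  qed
  have e2: "(real n powr (a - 2)) ^ sN = real n powr (- real (r - 1))"
  proof -
    have "(real n powr (a - 2)) ^ sN = real n powr (real sN * (a - 2))" using nn by (simp add: powr_power)
    also have "real sN * (a - 2) = - real (r - 1)" unfolding a_def sN using rr by (simp add: field_simps of_nat_diff)
    finally show ?thesis .
  qed
  have e3: "(L powr (1 / real sN)) ^ sN = L"
  proof -
    have "(L powr (1 / real sN)) ^ sN = L powr (real sN * (1 / real sN))" using L by (simp add: powr_power)
    also have "\<dots> = L" using sNpos L by simp
    finally show ?thesis .
  qed
  have e4: "(real n / real r) ^ (r - 1) = real n powr (real (r - 1)) / real r ^ (r - 1)"
    using nn by (simp add: power_divide powr_realpow)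
  have "(real n / real r) ^ (r - 1) * (m_r r n / (c0 * real n ^ 2)) ^ sN
      = real n powr (real (r - 1)) / real r ^ (r - 1) * ((theta r / c0) ^ sN * real n powr (- real (r - 1)) * L)"
    unfolding e1 e4 power_mult_distrib e2 e3 ..
  also have "(theta r / c0) ^ sN = real r ^ (r - 1) * A"
    unfolding c0_def sN_def A_def by (rule theta_id[OF r])
  also have "real n powr (real (r - 1)) / real r ^ (r - 1) * (real r ^ (r - 1) * A * real n powr (- real (r - 1)) * L)
      = (real n powr (real (r - 1)) * real n powr (- real (r - 1))) * A * L"
    using rr by (simp add: field_simps)
  also have "real n powr (real (r - 1)) * real n powr (- real (r - 1)) = 1"
    using nn by (simp add: powr_add[symmetric])
  finally show ?thesis unfolding c0_def sN_def A_def L_def by simp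
qed


lemma chern_exp:
  assumes eta: "\<eta> > 0" and p: "0 \<le> p" "p \<le> 1" and Nq: "real N * p = (1 + \<eta>) * real q"
  shows "(\<Sum>k<q. real (N choose k) * (p ^ k * (1 - p) ^ (N - k))) \<le> exp (- (\<eta> - ln (1 + \<eta>)) * real q)"
proof -
  define y where "y = p * \<eta> / (1 + \<eta>)"
  have y: "0 \<le> y" "y \<le> 1"
  proof -
    show "0 \<le> y" unfolding y_def using p eta by simp
    have "p * \<eta> \<le> 1 * (1 + \<eta>)" using p eta by (intro mult_mono) auto
    then show "y \<le> 1" unfolding y_def using eta by (simp add: divide_le_eq)
  qed
  have "(\<Sum>k<q. real (N choose k) * (p ^ k * (1 - p) ^ (N - k))) \<le> (p * (1 / (1 + \<eta>)) + (1 - p)) ^ N / (1 / (1 + \<eta>)) ^ q"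
    by (rule chernoff) (use p eta in auto)
  also have "p * (1 / (1 + \<eta>)) + (1 - p) = 1 - y" unfolding y_def using eta by (simp add: field_simps)
  also have "(1 - y) ^ N / (1 / (1 + \<eta>)) ^ q = (1 - y) ^ N * (1 + \<eta>) ^ q" by (simp add: power_one_over)
  also have "\<dots> \<le> exp (- y) ^ N * (1 + \<eta>) ^ q"
  proof (rule mult_right_mono)
    have "1 - y \<le> exp (- y)" using exp_ge_add_one_self[of "- y"] by simp
    then show "(1 - y) ^ N \<le> exp (- y) ^ N" using y by (intro power_mono) auto
  qed (use eta in simp)
  also have "exp (- y) ^ N = exp (- (\<eta> * real q))"
  proof -
    have "y * real N = \<eta> * real q" unfolding y_def using Nq eta by (simp add: field_simps)
    then show ?thesis by (simp add: exp_of_nat_mult[symmetric] mult.commute)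
  qed
  also have "(1 + \<eta>) ^ q = exp (real q * ln (1 + \<eta>))" using eta by (simp add: exp_of_nat_mult)
  also have "exp (- (\<eta> * real q)) * exp (real q * ln (1 + \<eta>)) = exp (- (\<eta> - ln (1 + \<eta>)) * real q)"
    by (simp add: exp_add[symmetric] algebra_simps)
  finally show ?thesis .
qed

lemma m_r_alt:
  assumes r: "2 \<le> r"
  shows "m_r r n = theta r * real n powr ((2 * real r + 2) / (real r + 2)) * ln (real n) powr (1 / real ((r + 1 choose 2) - 1))"
proof -
  have "0 < r + 1 choose 2" using r zero_less_binomial_iff[of "r + 1" 2] by linarith
  then have "1 \<le> r + 1 choose 2" by linarith
  then have "real ((r + 1 choose 2) - 1) = real (r + 1 choose 2) - real (1::nat)" by (rule of_nat_diff)
  moreover have "2 - 2 / (real r + 2) = (2 * real r + 2) / (real r + 2)" by (simp add: field_simps)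
  ultimately show ?thesis unfolding m_r_def by simp
qed

lemma theta_pos: "2 \<le> r \<Longrightarrow> theta r > 0"
  unfolding theta_def by (intro mult_pos_pos) auto

lemma pointwise:
  fixes r n mm :: nat and \<epsilon> \<gamma> \<eta> Z \<beta> c0 A \<rho> \<tau> \<rho>2 K \<delta> :: real
  assumes r: "2 \<le> r" and eps: "0 < \<epsilon>" "\<epsilon> < 1" and gam: "\<gamma> > 0" and eta: "\<eta> > 0"
    and H1: "(1 + \<eta>) * (1 - \<epsilon>) / (1 - real r * \<gamma>)^2 \<le> 1 - \<epsilon> / 2"
    and H2: "(1 + \<gamma> * real r) ^ (r - 1) \<le> 1 + \<epsilon> / 4"
    and P: "in_Pnr n r \<gamma> V" and e: "e \<in> partite_compl n r V"
    and nm: "n \<le> mm" "real mm \<le> (1 - \<epsilon>) * m_r r n"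
    and defs: "\<beta> = 1 - real r * \<gamma>" "c0 = (real r - 1) / (2 * real r)" "A = (2 * real r + 2) / (real r + 2)"
      "\<rho> = (1 + \<epsilon> / 4) * (1 - \<epsilon> / 2) ^ ((r + 1 choose 2) - 1)" "\<tau> = (1 - \<rho>) / 2" "\<rho>2 = \<rho> / (1 - \<tau>)"
      "K = (1 + \<epsilon> / 4) * A * ((1 + \<eta>) / \<beta>) ^ ((r + 1 choose 2) - 1)" "\<delta> = \<eta> - ln (1 + \<eta>)"
    and n3: "3 \<le> n"
    and E2: "(1 + \<eta>) * m_r r n / (c0 * \<beta> * real n ^ 2) \<le> \<tau>"
    and E3: "K / ((1 - \<tau>) * ln (real n)) \<le> ln 2"
    and E4: "exp (- \<delta> * (real n - 1)) \<le> 1 / 4"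
    and E5: "2 * exp (- \<delta> * (real n - 1)) \<le> real n powr (- (\<rho>2 * A))"
    and E6: "4 * Z \<le> real n"
    and E7: "2 * Z \<le> theta r * real n powr (A * (1 - \<rho>2)) * ln (real n) powr (1 / real ((r + 1 choose 2) - 1) - 1)"
  shows "Z \<le> real mm * real (card (G_plus n r V mm e \<inter> F_free n mm r)) / real (card (partite_graph n r V) choose (mm - 1))"
proof -
  define sN where "sN = (r + 1 choose 2) - 1"
  define L where "L = ln (real n)"
  define N where "N = card (partite_graph n r V)"
  define q where "q = mm - 1"
  define lam where "lam = 1 + \<eta>"
  define p where "p = lam * real q / real N"
  define t where "t = p ^ sN"
  define Mb where "Mb = ((1 / real r + \<gamma>) * real n) ^ (r - 1)"
  define B where "B = (real n / real r) ^ (r - 1)"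
  define cnt' where "cnt' = real (card (G_plus n r V mm e \<inter> F_free n mm r))"
  define R where "R = real mm * cnt' / real (N choose q)"
  have rr: "real r \<ge> 2" using r by simp
  have nn: "real n \<ge> 3" using n3 by simp
  have sN: "real sN = (real r + 2) * (real r - 1) / 2" unfolding sN_def by (rule s_real[OF r])
  have sN1: "1 \<le> sN"
  proof -
    have "(real r + 2) * (real r - 1) \<ge> 4 * 1" using rr by (intro mult_mono) auto
    then have "real sN \<ge> 2" using sN by simp
    then show ?thesis by simp
  qed
  have L1: "L \<ge> 1"
  proof -
    have "exp (1::real) \<le> 3" using exp_le by simp
    then have "exp 1 \<le> real n" using nn by simp
    then show ?thesis unfolding L_def using ln_ge_iff[of "real n" 1] nn by simp
  qed
  have rg: "real r * \<gamma> \<le> \<epsilon> / 4"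
  proof -
    have "(1 + \<gamma> * real r) ^ 1 \<le> (1 + \<gamma> * real r) ^ (r - 1)"
      by (rule power_increasing) (use r gam in auto)
    then show ?thesis using H2 by (simp add: mult.commute)
  qed
  have beta: "\<beta> > 0" "\<beta> \<le> 1" "\<beta> \<ge> 3 / 4" using rg eps gam rr unfolding defs(1) by auto
  have rho: "0 \<le> \<rho>" "\<rho> < 1"
  proof -
    have "(1 - \<epsilon> / 2) ^ sN \<le> (1 - \<epsilon> / 2) ^ 1"
      by (rule power_decreasing) (use sN1 eps in auto)
    then have "\<rho> \<le> (1 + \<epsilon> / 4) * (1 - \<epsilon> / 2)" unfolding defs(4) sN_def[symmetric]
      using eps by (intro mult_left_mono) auto
    also have "\<dots> < 1"
    proof -
      have "0 \<le> \<epsilon> * \<epsilon>" by simp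
      moreover have "(1 + \<epsilon> / 4) * (1 - \<epsilon> / 2) = 1 - \<epsilon> / 4 - \<epsilon> * \<epsilon> / 8" by (simp add: algebra_simps)
      ultimately show ?thesis using eps by linarith
    qed
    finally show "\<rho> < 1" .
    show "0 \<le> \<rho>" unfolding defs(4) using eps by simp
  qed
  have tau: "0 < \<tau>" "\<tau> \<le> 1 / 2" "1 / 2 \<le> 1 - \<tau>" using rho unfolding defs(5) by auto
  have rho2: "0 \<le> \<rho>2" "\<rho>2 < 1" "\<rho> = \<rho>2 * (1 - \<tau>)" using rho tau unfolding defs(6)
    by (auto simp: field_simps defs(5))
  have Apos: "A > 0" unfolding defs(3) using rr by simp
  have c0pos: "c0 > 0" unfolding defs(2) using rr by simp
  have Nlow: "c0 * \<beta> * real n ^ 2 \<le> real N"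
  proof -
    have el: "real n * real n * (1 - 1 / real r - \<gamma>) \<le> 2 * real N"
      unfolding N_def by (rule edges_lower[OF P])
    have "2 * (c0 * \<beta>) = (real r - 1) / real r - (real r - 1) * \<gamma>"
      unfolding defs(1,2) using rr by (simp add: field_simps)
    also have "\<dots> \<le> (real r - 1) / real r - \<gamma>" using rr gam by (simp add: algebra_simps)
    also have "\<dots> = 1 - 1 / real r - \<gamma>" using rr by (simp add: field_simps)
    finally have "2 * (c0 * \<beta>) * (real n * real n) \<le> (1 - 1 / real r - \<gamma>) * (real n * real n)"
      by (intro mult_right_mono) auto
    then show ?thesis using el by (simp add: power2_eq_square algebra_simps)
  qed
  have Npos: "real N > 0"
  proof -
    have "c0 * \<beta> * real n ^ 2 > 0" using c0pos beta nn by simp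
    then show ?thesis using Nlow by linarith
  qed
  have mrpos: "m_r r n > 0"
  proof (rule ccontr)
    assume "\<not> m_r r n > 0"
    then have "(1 - \<epsilon>) * m_r r n \<le> 0" using eps by (simp add: mult_nonneg_nonpos)
    then show False using nm n3 by simp
  qed
  have mm_mr: "real mm \<le> m_r r n" using nm(2) eps mrpos by (smt (verit) mult_le_cancel_right1)
  have qmm: "real q \<le> real mm" "real q \<ge> real n - 1" "real mm \<ge> 1" unfolding q_def using nm(1) n3 by auto
  have lam: "lam \<ge> 1" unfolding lam_def using eta by simp
  have p0: "0 \<le> p" unfolding p_def lam_def using eta Npos by simp
  have pmm: "p \<le> lam * real mm / (c0 * \<beta> * real n ^ 2)"
  proof -
    have "p \<le> lam * real mm / real N" unfolding p_def using qmm lam Npos by (simp add: divide_right_mono)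
    also have "\<dots> \<le> lam * real mm / (c0 * \<beta> * real n ^ 2)"
    proof (rule divide_left_mono)
      show "c0 * \<beta> * real n ^ 2 \<le> real N" by (rule Nlow)
      show "0 \<le> lam * real mm" using lam by simp
      have "0 < c0 * \<beta> * real n ^ 2" using c0pos beta nn by simp
      then show "0 < real N * (c0 * \<beta> * real n ^ 2)" using Npos by simp
    qed
    finally show ?thesis .
  qed
  have ptau: "p \<le> \<tau>"
  proof -
    have "lam * real mm / (c0 * \<beta> * real n ^ 2) \<le> lam * m_r r n / (c0 * \<beta> * real n ^ 2)"
      using mm_mr lam c0pos beta nn by (intro divide_right_mono mult_left_mono) auto
    then show ?thesis using pmm E2 unfolding lam_def by linarith
  qed
  have tp: "0 \<le> t" "t \<le> p"
  proof -
    show "0 \<le> t" unfolding t_def using p0 by simp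
    have "p ^ sN \<le> p ^ 1" by (rule power_decreasing) (use sN1 p0 ptau tau in auto)
    then show "t \<le> p" unfolding t_def by simp
  qed
  have qN: "q \<le> N"
  proof -
    have "lam * real q / real N \<le> 1" using ptau tau unfolding p_def by linarith
    then have "lam * real q \<le> real N" using Npos by (simp add: divide_le_eq)
    then have "real q \<le> real N" using lam qmm by (smt (verit) mult_le_cancel_right1 of_nat_0_le_iff)
    then show ?thesis by simp
  qed
  have t1: "t \<le> \<tau>" "t < 1" using tp ptau tau by auto
  have keyb: "exp (- Mb * t / (1 - t)) - (\<Sum>k<q. real (N choose k) * (p ^ k * (1 - p) ^ (N - k))) \<le> cnt' / real (N choose q)"
    using key[OF P e _ _ p0 _ _ r, of mm] qmm qN ptau tau gam
    unfolding Mb_def t_def sN_def N_def q_def cnt'_def by simp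
  have delta: "\<delta> > 0" unfolding defs(8) using ln_add_one_self_less_self[OF eta] by simp
  have chb: "(\<Sum>k<q. real (N choose k) * (p ^ k * (1 - p) ^ (N - k))) \<le> exp (- \<delta> * (real n - 1))"
  proof -
    have "(\<Sum>k<q. real (N choose k) * (p ^ k * (1 - p) ^ (N - k))) \<le> exp (- (\<eta> - ln (1 + \<eta>)) * real q)"
    proof (rule chern_exp[OF eta p0])
      show "p \<le> 1" using ptau tau by linarith
      show "real N * p = (1 + \<eta>) * real q" using Npos unfolding p_def lam_def by simp
    qed
    also have "\<dots> \<le> exp (- \<delta> * (real n - 1))" unfolding defs(8)[symmetric] using delta qmm by simp
    finally show ?thesis .
  qed
  have main: "exp (- Mb * t / (1 - t)) - exp (- \<delta> * (real n - 1)) \<le> cnt' / real (N choose q)"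
    using keyb chb by linarith
  have R: "R = real mm * (cnt' / real (N choose q))" unfolding R_def by simp
  have Mb: "Mb \<le> (1 + \<epsilon> / 4) * B"
  proof -
    have "Mb = (1 + \<gamma> * real r) ^ (r - 1) * B"
      unfolding Mb_def B_def using rr by (simp add: power_mult_distrib[symmetric] field_simps)
    also have "\<dots> \<le> (1 + \<epsilon> / 4) * B" using H2 unfolding B_def by (intro mult_right_mono) auto
    finally show ?thesis .
  qed
  have Mt: "Mb * t \<le> (1 + \<epsilon> / 4) * ((lam / \<beta>) ^ sN * (real mm / m_r r n) ^ sN) * A * L"
  proof -
    have Mb0: "0 \<le> Mb" unfolding Mb_def using gam by simp
    have "t \<le> (lam * real mm / (c0 * \<beta> * real n ^ 2)) ^ sN" unfolding t_def
      by (rule power_mono[OF pmm p0])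
    also have "lam * real mm / (c0 * \<beta> * real n ^ 2) = (lam / \<beta>) * (real mm / m_r r n) * (m_r r n / (c0 * real n ^ 2))"
      using mrpos beta c0pos nn by (simp add: field_simps)
    also have "((lam / \<beta>) * (real mm / m_r r n) * (m_r r n / (c0 * real n ^ 2))) ^ sN
       = (lam / \<beta>) ^ sN * (real mm / m_r r n) ^ sN * (m_r r n / (c0 * real n ^ 2)) ^ sN"
      by (simp only: power_mult_distrib)
    finally have tb: "t \<le> (lam / \<beta>) ^ sN * (real mm / m_r r n) ^ sN * (m_r r n / (c0 * real n ^ 2)) ^ sN" .
    have id: "B * (m_r r n / (c0 * real n ^ 2)) ^ sN = A * L"
      unfolding B_def defs(2,3) sN_def L_def by (rule mr_id[OF r]) (use n3 in simp)
    have "Mb * t \<le> (1 + \<epsilon> / 4) * B * ((lam / \<beta>) ^ sN * (real mm / m_r r n) ^ sN * (m_r r n / (c0 * real n ^ 2)) ^ sN)"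
      using Mb tb Mb0 tp(1) by (intro mult_mono) (auto simp: B_def)
    also have "\<dots> = (1 + \<epsilon> / 4) * ((lam / \<beta>) ^ sN * (real mm / m_r r n) ^ sN) * (B * (m_r r n / (c0 * real n ^ 2)) ^ sN)"
      by (simp add: ac_simps)
    also have "\<dots> = (1 + \<epsilon> / 4) * ((lam / \<beta>) ^ sN * (real mm / m_r r n) ^ sN) * A * L" unfolding id by simp
    finally show ?thesis .
  qed
  have X: "Mb * t / (1 - t) \<le> Mb * t / (1 - \<tau>)"
  proof (rule divide_left_mono)
    show "0 \<le> Mb * t" unfolding Mb_def using gam tp by simp
    show "1 - \<tau> \<le> 1 - t" using t1 by simp
    show "0 < (1 - t) * (1 - \<tau>)" using t1 tau by simp
  qed
  have Lpos: "L > 0" using L1 by simp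
  have cq: "0 \<le> cnt' / real (N choose q)" unfolding cnt'_def by simp
  have "Z \<le> R"
  proof (cases "m_r r n / L \<le> real mm")
    case True
    have xb: "(lam / \<beta>) ^ sN * (real mm / m_r r n) ^ sN \<le> (1 - \<epsilon> / 2) ^ sN"
    proof -
      have "(lam / \<beta>) ^ sN * (real mm / m_r r n) ^ sN = (lam * real mm / (\<beta> * m_r r n)) ^ sN"
        by (simp add: power_mult_distrib[symmetric])
      also have "\<dots> \<le> (1 - \<epsilon> / 2) ^ sN"
      proof (rule power_mono)
        show "0 \<le> lam * real mm / (\<beta> * m_r r n)" using lam beta mrpos by simp
        have "lam * real mm / (\<beta> * m_r r n) = (lam / \<beta>) * (real mm / m_r r n)" by simp
        also have "\<dots> \<le> (lam / \<beta>) * (1 - \<epsilon>)"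
          using nm(2) mrpos lam beta by (intro mult_left_mono) (auto simp: divide_le_eq)
        also have "\<dots> \<le> (lam / \<beta>) * (1 - \<epsilon>) / \<beta>"
          using beta lam eps by (simp add: le_divide_eq)
        also have "\<dots> = (1 + \<eta>) * (1 - \<epsilon>) / (1 - real r * \<gamma>) ^ 2"
          unfolding lam_def defs(1) by (simp add: power2_eq_square)
        also have "\<dots> \<le> 1 - \<epsilon> / 2" by (rule H1)
        finally show "lam * real mm / (\<beta> * m_r r n) \<le> 1 - \<epsilon> / 2" .
      qed
      finally show ?thesis .
    qed
    have "Mb * t \<le> \<rho> * A * L"
    proof -
      have "(1 + \<epsilon> / 4) * ((lam / \<beta>) ^ sN * (real mm / m_r r n) ^ sN) * A * L \<le> (1 + \<epsilon> / 4) * (1 - \<epsilon> / 2) ^ sN * A * L"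
        using xb eps Apos Lpos by (intro mult_right_mono mult_left_mono) auto
      then show ?thesis using Mt unfolding defs(4) sN_def[symmetric] by linarith
    qed
    then have "Mb * t / (1 - \<tau>) \<le> \<rho> * A * L / (1 - \<tau>)" using tau by (intro divide_right_mono) auto
    also have "\<rho> * A * L / (1 - \<tau>) = \<rho>2 * A * L"
    proof -
      have "\<rho> * A * L / (1 - \<tau>) = \<rho>2 * A * L * ((1 - \<tau>) / (1 - \<tau>))" unfolding rho2(3) by simp
      also have "(1 - \<tau>) / (1 - \<tau>) = 1" using tau by simp
      finally show ?thesis by simp
    qed
    finally have Xb: "Mb * t / (1 - t) \<le> \<rho>2 * A * L" using X by linarith
    have "real n powr (- (\<rho>2 * A)) = exp (- (\<rho>2 * A) * L)" unfolding L_def powr_def using nn by simp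
    also have "\<dots> \<le> exp (- Mb * t / (1 - t))" using Xb by simp
    finally have ex: "real n powr (- (\<rho>2 * A)) \<le> exp (- Mb * t / (1 - t))" .
    have cb: "real n powr (- (\<rho>2 * A)) / 2 \<le> cnt' / real (N choose q)" using ex main E5 by linarith
    have "Z \<le> theta r * real n powr (A * (1 - \<rho>2)) * L powr (1 / real sN - 1) / 2"
      using E7 unfolding L_def sN_def by simp
    also have "theta r * real n powr (A * (1 - \<rho>2)) * L powr (1 / real sN - 1) = (m_r r n / L) * real n powr (- (\<rho>2 * A))"
    proof -
      have "m_r r n / L = theta r * real n powr A * (L powr (1 / real sN) / L)"
        unfolding m_r_alt[OF r] defs(3)[symmetric] sN_def[symmetric] L_def by simp
      also have "L powr (1 / real sN) / L = L powr (1 / real sN - 1)" using Lpos by (simp add: powr_diff)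
      finally have "m_r r n / L * real n powr (- (\<rho>2 * A)) = theta r * L powr (1 / real sN - 1) * (real n powr A * real n powr (- (\<rho>2 * A)))"
        by simp
      also have "real n powr A * real n powr (- (\<rho>2 * A)) = real n powr (A * (1 - \<rho>2))"
        by (simp add: powr_add[symmetric] algebra_simps)
      finally show ?thesis by simp
    qed
    also have "(m_r r n / L) * real n powr (- (\<rho>2 * A)) / 2 \<le> real mm * (real n powr (- (\<rho>2 * A)) / 2)"
    proof -
      have "(m_r r n / L) * real n powr (- (\<rho>2 * A)) \<le> real mm * real n powr (- (\<rho>2 * A))"
        using True by (rule mult_right_mono) simp
      then show ?thesis by simp
    qed
    also have "\<dots> \<le> real mm * (cnt' / real (N choose q))" using cb by (intro mult_left_mono) auto
    finally show ?thesis unfolding R .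
  next
    case False
    have "(real mm / m_r r n) ^ sN \<le> (1 / L) ^ sN"
    proof (rule power_mono)
      show "0 \<le> real mm / m_r r n" using mrpos by simp
      have "real mm < m_r r n / L" using False by simp
      then have "real mm * L < m_r r n" using Lpos by (simp add: less_divide_eq)
      then show "real mm / m_r r n \<le> 1 / L" using Lpos mrpos by (simp add: field_simps)
    qed
    also have "(1 / L) ^ sN \<le> (1 / L) ^ 2"
    proof (rule power_decreasing)
      show "2 \<le> sN" using sN rr
      proof -
        have "(real r + 2) * (real r - 1) \<ge> 4 * 1" using rr by (intro mult_mono) auto
        then have "real sN \<ge> 2" using sN by simp
        then show ?thesis by simp
      qed
    qed (use L1 in auto)
    finally have xs: "(real mm / m_r r n) ^ sN \<le> 1 / L ^ 2" by (simp add: power_one_over)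
    have "Mb * t \<le> (1 + \<epsilon> / 4) * ((lam / \<beta>) ^ sN * (1 / L ^ 2)) * A * L"
    proof -
      have "(1 + \<epsilon> / 4) * ((lam / \<beta>) ^ sN * (real mm / m_r r n) ^ sN) * A * L \<le> (1 + \<epsilon> / 4) * ((lam / \<beta>) ^ sN * (1 / L ^ 2)) * A * L"
        using xs eps Apos Lpos lam beta by (intro mult_right_mono mult_left_mono) auto
      then show ?thesis using Mt by linarith
    qed
    also have "\<dots> = K / L"
    proof -
      define W where "W = (lam / \<beta>) ^ sN"
      have "(1 + \<epsilon> / 4) * (W * (1 / L ^ 2)) * A * L = (1 + \<epsilon> / 4) * A * W / L"
        using Lpos by (simp add: power2_eq_square field_simps)
      then show ?thesis unfolding W_def defs(7) lam_def sN_def .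
    qed
    finally have "Mb * t \<le> K / L" .
    then have "Mb * t / (1 - \<tau>) \<le> K / L / (1 - \<tau>)" using tau by (intro divide_right_mono) auto
    also have "\<dots> = K / ((1 - \<tau>) * ln (real n))" unfolding L_def by simp
    also have "\<dots> \<le> ln 2" by (rule E3)
    finally have "Mb * t / (1 - t) \<le> ln 2" using X by linarith
    then have "exp (- ln 2) \<le> exp (- Mb * t / (1 - t))" by simp
    then have "1 / 2 \<le> exp (- Mb * t / (1 - t))" by (simp add: exp_minus)
    then have cb: "1 / 4 \<le> cnt' / real (N choose q)" using main E4 by linarith
    have "Z \<le> real mm * (1 / 4)" using E6 nm(1) by simp
    also have "\<dots> \<le> real mm * (cnt' / real (N choose q))" using cb by (intro mult_left_mono) auto
    finally show ?thesis unfolding R .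
  qed
  then show ?thesis unfolding R_def cnt'_def N_def q_def .
qed


lemma G1: "c > 0 \<Longrightarrow> ((\<lambda>x::real. x powr (-c) * ln x powr d) \<longlongrightarrow> 0) at_top"
  by real_asymp
lemma G2: "c > 0 \<Longrightarrow> filterlim (\<lambda>x::real. x powr c * ln x powr d) at_top at_top"
  by real_asymp
lemma G3: "c > 0 \<Longrightarrow> \<delta> > 0 \<Longrightarrow> ((\<lambda>x::real. exp (-\<delta> * (x - 1)) * x powr c) \<longlongrightarrow> 0) at_top"
  by real_asymp
lemma G4: "\<delta> > 0 \<Longrightarrow> ((\<lambda>x::real. exp (-\<delta> * (x - 1))) \<longlongrightarrow> 0) at_top"
  by real_asymp

lemma seq_of: "filterlim f F at_top \<Longrightarrow> filterlim (\<lambda>n::nat. f (real n)) F sequentially"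
  by (rule filterlim_compose[OF _ filterlim_real_sequentially])


theorem lemma5p3:
  fixes r :: nat and \<epsilon> \<gamma> \<eta> :: real
    and Pi :: "nat \<Rightarrow> (nat \<Rightarrow> nat set)" and e :: "nat \<Rightarrow> nat set" and m :: "nat \<Rightarrow> nat"
  assumes "r \<ge> 2" and "0 < \<epsilon>" and "\<epsilon> < 1" and "\<gamma> > 0" and "\<eta> > 0"
    and "(1 + \<eta>) * (1 - \<epsilon>) / (1 - real r * \<gamma>)^2 \<le> 1 - \<epsilon> / 2"
    and "(1 + \<gamma> * real r) ^ (r - 1) \<le> 1 + \<epsilon> / 4"
    and "\<forall>\<^sub>F n in sequentially. in_Pnr n r \<gamma> (Pi n) \<and> e n \<in> partite_compl n r (Pi n) \<and>
           n \<le> m n \<and> real (m n) \<le> (1 - \<epsilon>) * m_r r n"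
  shows "filterlim (\<lambda>n. real (m n) * real (card (G_plus n r (Pi n) (m n) (e n) \<inter> F_free n (m n) r))
             / real (card (partite_graph n r (Pi n)) choose (m n - 1))) at_top sequentially"
proof -
  define sN where "sN = (r + 1 choose 2) - 1"
  define \<beta> where "\<beta> = 1 - real r * \<gamma>"
  define c0 where "c0 = (real r - 1) / (2 * real r)"
  define A where "A = (2 * real r + 2) / (real r + 2)"
  define \<rho> where "\<rho> = (1 + \<epsilon> / 4) * (1 - \<epsilon> / 2) ^ ((r + 1 choose 2) - 1)"
  define \<tau> where "\<tau> = (1 - \<rho>) / 2"
  define \<rho>2 where "\<rho>2 = \<rho> / (1 - \<tau>)"
  define K where "K = (1 + \<epsilon> / 4) * A * ((1 + \<eta>) / \<beta>) ^ ((r + 1 choose 2) - 1)"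
  define \<delta> where "\<delta> = \<eta> - ln (1 + \<eta>)"
  note defs = \<beta>_def c0_def A_def \<rho>_def \<tau>_def \<rho>2_def K_def \<delta>_def
  have rr: "real r \<ge> 2" using assms(1) by simp
  have rg: "real r * \<gamma> \<le> \<epsilon> / 4"
  proof -
    have "(1 + \<gamma> * real r) ^ 1 \<le> (1 + \<gamma> * real r) ^ (r - 1)"
      by (rule power_increasing) (use assms(1,4) in auto)
    then show ?thesis using assms(7) by (simp add: mult.commute)
  qed
  have beta: "\<beta> > 0" using rg assms(3) unfolding \<beta>_def by auto
  have c0: "c0 > 0" unfolding c0_def using rr by simp
  have Apos: "A > 0" unfolding A_def using rr by simp
  have rho: "0 < \<rho>" "\<rho> < 1"
  proof -
    have sN1: "1 \<le> (r + 1 choose 2) - 1"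
    proof -
      have "(real r + 2) * (real r - 1) \<ge> 4 * 1" using rr by (intro mult_mono) auto
      then have "real ((r + 1 choose 2) - 1) \<ge> 2" using s_real[OF assms(1)] by simp
      then show ?thesis by simp
    qed
    have "(1 - \<epsilon> / 2) ^ ((r + 1 choose 2) - 1) \<le> (1 - \<epsilon> / 2) ^ 1"
      by (rule power_decreasing) (use sN1 assms(2,3) in auto)
    then have "\<rho> \<le> (1 + \<epsilon> / 4) * (1 - \<epsilon> / 2)" unfolding \<rho>_def
      using assms(2,3) by (intro mult_left_mono) auto
    also have "\<dots> < 1"
    proof -
      have "0 \<le> \<epsilon> * \<epsilon>" by simp
      moreover have "(1 + \<epsilon> / 4) * (1 - \<epsilon> / 2) = 1 - \<epsilon> / 4 - \<epsilon> * \<epsilon> / 8" by (simp add: algebra_simps)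
      ultimately show ?thesis using assms(2) by linarith
    qed
    finally show "\<rho> < 1" .
    show "0 < \<rho>" unfolding \<rho>_def using assms(2,3) by simp
  qed
  have tau: "0 < \<tau>" "\<tau> < 1" using rho unfolding \<tau>_def by auto
  have rho2: "0 < \<rho>2" "\<rho>2 < 1" using rho tau unfolding \<rho>2_def \<tau>_def by (auto simp: field_simps)
  have Kpos: "K > 0" unfolding K_def using assms(2,5) beta Apos by simp
  have delta: "\<delta> > 0" unfolding \<delta>_def using ln_add_one_self_less_self[OF assms(5)] by simp
  have th: "theta r > 0" by (rule theta_pos[OF assms(1)])
  define d where "d = 1 / real sN"
  define C2 where "C2 = (1 + \<eta>) * theta r / (c0 * \<beta>)"
  have C2: "C2 > 0" unfolding C2_def using assms(5) th c0 beta by simp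
  have ev2: "\<forall>\<^sub>F n in sequentially. (1 + \<eta>) * m_r r n / (c0 * \<beta> * real n ^ 2) \<le> \<tau>"
  proof -
    have lim: "((\<lambda>n::nat. real n powr (- (2 - A)) * ln (real n) powr d) \<longlongrightarrow> 0) sequentially"
      by (rule seq_of[OF G1]) (use rr in \<open>simp add: A_def field_simps\<close>)
    have "\<forall>\<^sub>F n in sequentially. real n powr (- (2 - A)) * ln (real n) powr d < \<tau> / C2"
      by (rule order_tendstoD(2)[OF lim]) (use tau C2 in simp)
    moreover have "\<forall>\<^sub>F n in sequentially. n \<ge> 1" by (rule eventually_ge_at_top)
    ultimately show ?thesis
    proof eventually_elim
      case (elim n)
      have n1: "real n \<ge> 1" using elim by simp
      have sq: "real n ^ 2 = real n powr 2"
        using powr_realpow[of "real n" 2] n1 by simp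
      have "(1 + \<eta>) * m_r r n / (c0 * \<beta> * real n ^ 2) = C2 * (real n powr A / real n powr 2 * ln (real n) powr d)"
        unfolding C2_def m_r_alt[OF assms(1)] A_def[symmetric] sN_def[symmetric] d_def[symmetric] sq
        using c0 beta by (simp add: field_simps)
      also have "real n powr A / real n powr 2 = real n powr (- (2 - A))"
        unfolding powr_diff[symmetric] by simp
      also have "C2 * (real n powr (- (2 - A)) * ln (real n) powr d) \<le> C2 * (\<tau> / C2)"
        using elim C2 by (intro mult_left_mono) auto
      also have "\<dots> = \<tau>" using C2 by simp
      finally show ?case .
    qed
  qed
  have ev3: "\<forall>\<^sub>F n in sequentially. K / ((1 - \<tau>) * ln (real n)) \<le> ln 2"
  proof -
    have "filterlim (\<lambda>n::nat. ln (real n)) at_top sequentially" by (rule seq_of[OF ln_at_top])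
    then have "\<forall>\<^sub>F n in sequentially. K / ((1 - \<tau>) * ln 2) + 1 \<le> ln (real n)"
      by (simp add: filterlim_at_top)
    then show ?thesis
    proof (rule eventually_mono)
      fix n assume h: "K / ((1 - \<tau>) * ln 2) + 1 \<le> ln (real n)"
      have p1: "(1 - \<tau>) * ln 2 > 0" using tau by simp
      have "K / ((1 - \<tau>) * ln 2) > 0" using Kpos p1 by simp
      then have Lp: "ln (real n) > 0" using h by linarith
      have "K / ((1 - \<tau>) * ln 2) \<le> ln (real n)" using h by linarith
      then have "K \<le> ln (real n) * ((1 - \<tau>) * ln 2)" using p1 by (simp add: divide_le_eq)
      then show "K / ((1 - \<tau>) * ln (real n)) \<le> ln 2" using Lp tau by (simp add: divide_le_eq algebra_simps)
    qed
  qed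
  have ev4: "\<forall>\<^sub>F n in sequentially. exp (- \<delta> * (real n - 1)) \<le> 1 / 4"
  proof -
    have "((\<lambda>n::nat. exp (- \<delta> * (real n - 1))) \<longlongrightarrow> 0) sequentially" by (rule seq_of[OF G4[OF delta]])
    then have "\<forall>\<^sub>F n in sequentially. exp (- \<delta> * (real n - 1)) < 1 / 4" by (rule order_tendstoD(2)) simp
    then show ?thesis by (rule eventually_mono) simp
  qed
  have ev5: "\<forall>\<^sub>F n in sequentially. 2 * exp (- \<delta> * (real n - 1)) \<le> real n powr (- (\<rho>2 * A))"
  proof -
    have c: "\<rho>2 * A > 0" using rho2 Apos by simp
    have "((\<lambda>n::nat. exp (- \<delta> * (real n - 1)) * real n powr (\<rho>2 * A)) \<longlongrightarrow> 0) sequentially"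
      by (rule seq_of[OF G3[OF c delta]])
    then have "\<forall>\<^sub>F n in sequentially. exp (- \<delta> * (real n - 1)) * real n powr (\<rho>2 * A) < 1 / 2" by (rule order_tendstoD(2)) simp
    moreover have "\<forall>\<^sub>F n in sequentially. n \<ge> 1" by (rule eventually_ge_at_top)
    ultimately show ?thesis
    proof eventually_elim
      case (elim n)
      have np: "real n > 0" using elim by simp
      have "2 * exp (- \<delta> * (real n - 1)) = 2 * (exp (- \<delta> * (real n - 1)) * real n powr (\<rho>2 * A)) * real n powr (- (\<rho>2 * A))"
        using np by (simp add: powr_minus field_simps)
      also have "\<dots> \<le> 2 * (1 / 2) * real n powr (- (\<rho>2 * A))"
        using elim by (intro mult_right_mono mult_left_mono) auto
      finally show ?case by simp
    qed
  qed
  show ?thesis unfolding filterlim_at_top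
  proof
    fix Z :: real
    have ev6: "\<forall>\<^sub>F n in sequentially. 4 * Z \<le> real n"
      using filterlim_real_sequentially unfolding filterlim_at_top by simp
    have ev7: "\<forall>\<^sub>F n in sequentially. 2 * Z \<le> theta r * real n powr (A * (1 - \<rho>2)) * ln (real n) powr (1 / real ((r + 1 choose 2) - 1) - 1)"
    proof -
      have c: "A * (1 - \<rho>2) > 0" using Apos rho2 by simp
      have "filterlim (\<lambda>n::nat. real n powr (A * (1 - \<rho>2)) * ln (real n) powr (1 / real ((r + 1 choose 2) - 1) - 1)) at_top sequentially"
        by (rule seq_of[OF G2[OF c]])
      then have "\<forall>\<^sub>F n in sequentially. 2 * Z / theta r \<le> real n powr (A * (1 - \<rho>2)) * ln (real n) powr (1 / real ((r + 1 choose 2) - 1) - 1)"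
        by (simp add: filterlim_at_top)
      then show ?thesis
      proof (rule eventually_mono)
        fix n assume "2 * Z / theta r \<le> real n powr (A * (1 - \<rho>2)) * ln (real n) powr (1 / real ((r + 1 choose 2) - 1) - 1)"
        then show "2 * Z \<le> theta r * real n powr (A * (1 - \<rho>2)) * ln (real n) powr (1 / real ((r + 1 choose 2) - 1) - 1)"
          using th by (simp add: divide_le_eq mult.assoc mult.commute)
      qed
    qed
    have ev3': "\<forall>\<^sub>F n in sequentially. (3::nat) \<le> n" by (rule eventually_ge_at_top)
    show "\<forall>\<^sub>F n in sequentially. Z \<le> real (m n) * real (card (G_plus n r (Pi n) (m n) (e n) \<inter> F_free n (m n) r))
             / real (card (partite_graph n r (Pi n)) choose (m n - 1))"
      using assms(8) ev2 ev3 ev4 ev5 ev6 ev7 ev3'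
    proof eventually_elim
      case (elim n)
      show ?case
        by (rule pointwise[OF assms(1-7) _ _ _ _ defs elim(8) elim(2-7)]) (use elim(1) in auto)
    qed
  qed
qed


end
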